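(* Let $G$ be a cubical $\omega$-category with connections and $x\in G_n$. Then $x$ is thin if and only if $x$ is an (iterated) composite, under the compositions $\circ_k$ of $G_n$, of elements of the forms $\varepsilon_iy$ and $\Gamma^\alpha_jz$ for various $i,j,\alpha,y,z$.
   Context: A cubical $\omega$-category with connections $G$ consists of sets $G_n$ ($n\ge0$), face maps $\partial^\alpha_i:G_n\to G_{n-1}$, degeneracies $\varepsilon_i:G_{n-1}\to G_n$, connections $\Gamma^\alpha_i:G_n\to G_{n+1}$ ($1\le i\le n$, $\alpha=\pm$) and partial compositions $\circ_j$ on $G_n$ ($1\le j\le n$, $a\circ_jb$ defined iff $\partial^+_ja=\partial^-_jb$) satisfying: $\partial^\alpha_i\partial^\beta_j=\partial^\beta_{j-1}\partial^\alpha_i$ ($i<j$), $\varepsilon_i\varepsilon_j=\varepsilon_{j+1}\varepsilon_i$ ($i\le j$), $\partial^\alpha_i\varepsilon_j=\varepsilon_{j-1}\partial^\alpha_i$ ($i<j$), $\varepsilon_j\partial^\alpha_{i-1}$ ($i>j$), $\mathrm{id}$ ($i=j$); $\Gamma^\alpha_i\Gamma^\beta_j=\Gamma^\beta_{j+1}\Gamma^\alpha_i$ ($i<j$), $\Gamma^\alpha_i\Gamma^\alpha_i=\Gamma^\alpha_{i+1}\Gamma^\alpha_i$, $\Gamma^\alpha_i\varepsilon_j=\varepsilon_{j+1}\Gamma^\alpha_i$ ($i<j$), $\varepsilon_j\Gamma^\alpha_{i-1}$ ($i>j$), $\Gamma^\alpha_j\varepsilon_j=\varepsilon_{j+1}\varepsilon_j$,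 $\partial^\alpha_i\Gamma^\beta_j=\Gamma^\beta_{j-1}\partial^\alpha_i$ ($i<j$), $\Gamma^\beta_j\partial^\alpha_{i-1}$ ($i>j+1$), $\partial^\alpha_j\Gamma^\alpha_j=\partial^\alpha_{j+1}\Gamma^\alpha_j=\mathrm{id}$, $\partial^\alpha_j\Gamma^{-\alpha}_j=\partial^\alpha_{j+1}\Gamma^{-\alpha}_j=\varepsilon_j\partial^\alpha_j$; $\partial^-_j(a\circ_jb)=\partial^-_ja$, $\partial^+_j(a\circ_jb)=\partial^+_jb$, $\partial^\alpha_i(a\circ_jb)=\partial^\alpha_ia\circ_{j-1}\partial^\alpha_ib$ ($i<j$), $\partial^\alpha_ia\circ_j\partial^\alpha_ib$ ($i>j$); interchange for $i\ne j$; $\varepsilon_i(a\circ_jb)=\varepsilon_ia\circ_{j+1}\varepsilon_ib$ ($i\le j$), $\varepsilon_ia\circ_j\varepsilon_ib$ ($i>j$); $\Gamma^\alpha_i(a\circ_jb)=\Gamma^\alpha_ia\circ_{j+1}\Gamma^\alpha_ib$ ($i<j$), $\Gamma^\alpha_ia\circ_j\Gamma^\alpha_ib$ ($i>j$); $\Gamma^+_j(a\circ_jb)=(\Gamma^+_ja\circ_j\varepsilon_ja)\circ_{j+1}(\varepsilon_{j+1}a\circ_j\Gamma^+_jb)$, $\Gamma^-_j(a\circ_jb)=(\Gamma^-_ja\circ_j\varepsilon_{j+1}b)\circ_{j+1}(\varepsilon_jb\circ_j\Gamma^-_jb)$; each $\circ_j$ is a category structure with identities $\varepsilon_jy$; $\Gamma^+_ix\circ_i\Gamma^-_ix=\varepsilon_{i+1}x$,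 $\Gamma^+_ix\circ_{i+1}\Gamma^-_ix=\varepsilon_ix$. Folding operations on $G_n$: $\psi_ix=\Gamma^+_i\partial^-_{i+1}x\circ_{i+1}x\circ_{i+1}\Gamma^-_i\partial^+_{i+1}x$ ($1\le i\le n-1$), $\Psi_r=\psi_{r-1}\cdots\psi_1$, $\Phi_n=\Psi_1\Psi_2\cdots\Psi_n$. The $\omega$-category $\gamma G$: each $\Phi_n(G_n)$ is a (globular, strict) $\omega$-category with $d^\alpha_px=\varepsilon_1^{n-p}(\partial^\alpha_1)^{n-p}x$, $x\#_py=x\circ_{n-p}y$ for $0\le p<n$, and $d^\alpha_px=x$ with only composites $x\#_px=x$ for $p\ge n$; $\gamma G$ is the colimit of $\Phi_0(G_0)\xrightarrow{\varepsilon_1}\Phi_1(G_1)\xrightarrow{\varepsilon_1}\cdots$. The dimension of an element $u$ of an $\omega$-category is the least $p$ with $d^-_pu=d^+_pu=u$. Thin elements: identifying $x\in G_n$ with the homomorphism $M(I^n)\to\gamma G$ it determines (whose value on the top cell $I^n$ is $\Phi_nx$), $x$ is called thin if $\dim x(I^n)<n$, i.e. if the element $\Phi_nx\in\gamma G$ has dimension less than $n$ in the $\omega$-category $\gamma G$. *)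

theory Defs
  imports Main
begin

datatype sgn = Neg | Pos

fun opp :: "sgn \<Rightarrow> sgn" where
  "opp Neg = Pos" | "opp Pos = Neg"

text \<open>Conventions (all operations are indexed by the dimension n of their argument):
  cell G n  = the set G_n;
  fc G n i a : G_n \<rightarrow> G_(n-1) is the face map \<partial>^a_i  (1 \<le> i \<le> n);
  dg G n i   : G_n \<rightarrow> G_(n+1) is the degeneracy \<epsilon>_i  (1 \<le> i \<le> n+1);
  cn G n i a : G_n \<rightarrow> G_(n+1) is the connection \<Gamma>^a_i  (1 \<le> i \<le> n);
  cp G n j x y is x \<circ>_j y in G_n  (1 \<le> j \<le> n), defined iff \<partial>^+_j x = \<partial>^-_j y.\<close>

record 'a cubcat =
  cell :: "nat \<Rightarrow> 'a set"
  fc :: "nat \<Rightarrow> nat \<Rightarrow> sgn \<Rightarrow> 'a \<Rightarrow> 'a"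
  dg :: "nat \<Rightarrow> nat \<Rightarrow> 'a \<Rightarrow> 'a"
  cn :: "nat \<Rightarrow> nat \<Rightarrow> sgn \<Rightarrow> 'a \<Rightarrow> 'a"
  cp :: "nat \<Rightarrow> nat \<Rightarrow> 'a \<Rightarrow> 'a \<Rightarrow> 'a"

definition composable :: "'a cubcat \<Rightarrow> nat \<Rightarrow> nat \<Rightarrow> 'a \<Rightarrow> 'a \<Rightarrow> bool" where
  "composable G n j a b \<longleftrightarrow> a \<in> cell G n \<and> b \<in> cell G n \<and> 1 \<le> j \<and> j \<le> n
     \<and> fc G n j Pos a = fc G n j Neg b"

locale cubical_omega_cat_conn =
  fixes G :: "'a cubcat"
  assumes face_closed: "\<lbrakk>x \<in> cell G n; 1 \<le> i; i \<le> n\<rbrakk> \<Longrightarrow> fc G n i \<alpha> x \<in> cell G (n - 1)"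
    and deg_closed: "\<lbrakk>x \<in> cell G n; 1 \<le> i; i \<le> Suc n\<rbrakk> \<Longrightarrow> dg G n i x \<in> cell G (Suc n)"
    and conn_closed: "\<lbrakk>x \<in> cell G n; 1 \<le> i; i \<le> n\<rbrakk> \<Longrightarrow> cn G n i \<alpha> x \<in> cell G (Suc n)"
    and comp_closed: "composable G n j a b \<Longrightarrow> cp G n j a b \<in> cell G n"
    and face_face: "\<lbrakk>x \<in> cell G n; 1 \<le> i; i < j; j \<le> n\<rbrakk> \<Longrightarrow>
        fc G (n - 1) i \<alpha> (fc G n j \<beta> x) = fc G (n - 1) (j - 1) \<beta> (fc G n i \<alpha> x)"
    and deg_deg: "\<lbrakk>x \<in> cell G n; 1 \<le> i; i \<le> j; j \<le> Suc n\<rbrakk> \<Longrightarrow>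
        dg G (Suc n) i (dg G n j x) = dg G (Suc n) (Suc j) (dg G n i x)"
    and face_deg_lt: "\<lbrakk>x \<in> cell G n; 1 \<le> i; i < j; j \<le> Suc n\<rbrakk> \<Longrightarrow>
        fc G (Suc n) i \<alpha> (dg G n j x) = dg G (n - 1) (j - 1) (fc G n i \<alpha> x)"
    and face_deg_gt: "\<lbrakk>x \<in> cell G n; 1 \<le> j; j < i; i \<le> Suc n\<rbrakk> \<Longrightarrow>
        fc G (Suc n) i \<alpha> (dg G n j x) = dg G (n - 1) j (fc G n (i - 1) \<alpha> x)"
    and face_deg_eq: "\<lbrakk>x \<in> cell G n; 1 \<le> j; j \<le> Suc n\<rbrakk> \<Longrightarrow>
        fc G (Suc n) j \<alpha> (dg G n j x) = x"
    and conn_conn: "\<lbrakk>x \<in> cell G n; 1 \<le> i; i < j; j \<le> n\<rbrakk> \<Longrightarrow>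
        cn G (Suc n) i \<alpha> (cn G n j \<beta> x) = cn G (Suc n) (Suc j) \<beta> (cn G n i \<alpha> x)"
    and conn_conn_eq: "\<lbrakk>x \<in> cell G n; 1 \<le> i; i \<le> n\<rbrakk> \<Longrightarrow>
        cn G (Suc n) i \<alpha> (cn G n i \<alpha> x) = cn G (Suc n) (Suc i) \<alpha> (cn G n i \<alpha> x)"
    and conn_deg_lt: "\<lbrakk>x \<in> cell G n; 1 \<le> i; i < j; j \<le> Suc n\<rbrakk> \<Longrightarrow>
        cn G (Suc n) i \<alpha> (dg G n j x) = dg G (Suc n) (Suc j) (cn G n i \<alpha> x)"
    and conn_deg_gt: "\<lbrakk>x \<in> cell G n; 1 \<le> j; j < i; i \<le> Suc n\<rbrakk> \<Longrightarrow>
        cn G (Suc n) i \<alpha> (dg G n j x) = dg G (Suc n) j (cn G n (i - 1) \<alpha> x)"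
    and conn_deg_eq: "\<lbrakk>x \<in> cell G n; 1 \<le> j; j \<le> Suc n\<rbrakk> \<Longrightarrow>
        cn G (Suc n) j \<alpha> (dg G n j x) = dg G (Suc n) (Suc j) (dg G n j x)"
    and face_conn_lt: "\<lbrakk>x \<in> cell G n; 1 \<le> i; i < j; j \<le> n\<rbrakk> \<Longrightarrow>
        fc G (Suc n) i \<alpha> (cn G n j \<beta> x) = cn G (n - 1) (j - 1) \<beta> (fc G n i \<alpha> x)"
    and face_conn_gt: "\<lbrakk>x \<in> cell G n; 1 \<le> j; Suc j < i; i \<le> Suc n\<rbrakk> \<Longrightarrow>
        fc G (Suc n) i \<alpha> (cn G n j \<beta> x) = cn G (n - 1) j \<beta> (fc G n (i - 1) \<alpha> x)"
    and face_conn_same1: "\<lbrakk>x \<in> cell G n; 1 \<le> j; j \<le> n\<rbrakk> \<Longrightarrow>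
        fc G (Suc n) j \<alpha> (cn G n j \<alpha> x) = x"
    and face_conn_same2: "\<lbrakk>x \<in> cell G n; 1 \<le> j; j \<le> n\<rbrakk> \<Longrightarrow>
        fc G (Suc n) (Suc j) \<alpha> (cn G n j \<alpha> x) = x"
    and face_conn_opp1: "\<lbrakk>x \<in> cell G n; 1 \<le> j; j \<le> n\<rbrakk> \<Longrightarrow>
        fc G (Suc n) j \<alpha> (cn G n j (opp \<alpha>) x) = dg G (n - 1) j (fc G n j \<alpha> x)"
    and face_conn_opp2: "\<lbrakk>x \<in> cell G n; 1 \<le> j; j \<le> n\<rbrakk> \<Longrightarrow>
        fc G (Suc n) (Suc j) \<alpha> (cn G n j (opp \<alpha>) x) = dg G (n - 1) j (fc G n j \<alpha> x)"
    and comp_face_neg: "composable G n j a b \<Longrightarrow> fc G n j Neg (cp G n j a b) = fc G n j Neg a"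
    and comp_face_pos: "composable G n j a b \<Longrightarrow> fc G n j Pos (cp G n j a b) = fc G n j Pos b"
    and comp_face_lt: "\<lbrakk>composable G n j a b; 1 \<le> i; i < j\<rbrakk> \<Longrightarrow>
        fc G n i \<alpha> (cp G n j a b) = cp G (n - 1) (j - 1) (fc G n i \<alpha> a) (fc G n i \<alpha> b)"
    and comp_face_gt: "\<lbrakk>composable G n j a b; j < i; i \<le> n\<rbrakk> \<Longrightarrow>
        fc G n i \<alpha> (cp G n j a b) = cp G (n - 1) j (fc G n i \<alpha> a) (fc G n i \<alpha> b)"
    and interchange: "\<lbrakk>i \<noteq> j; composable G n i a b; composable G n i c d;
        composable G n j a c; composable G n j b d\<rbrakk> \<Longrightarrow>
        cp G n j (cp G n i a b) (cp G n i c d) = cp G n i (cp G n j a c) (cp G n j b d)"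
    and deg_comp_le: "\<lbrakk>composable G n j a b; 1 \<le> i; i \<le> j\<rbrakk> \<Longrightarrow>
        dg G n i (cp G n j a b) = cp G (Suc n) (Suc j) (dg G n i a) (dg G n i b)"
    and deg_comp_gt: "\<lbrakk>composable G n j a b; j < i; i \<le> Suc n\<rbrakk> \<Longrightarrow>
        dg G n i (cp G n j a b) = cp G (Suc n) j (dg G n i a) (dg G n i b)"
    and conn_comp_lt: "\<lbrakk>composable G n j a b; 1 \<le> i; i < j\<rbrakk> \<Longrightarrow>
        cn G n i \<alpha> (cp G n j a b) = cp G (Suc n) (Suc j) (cn G n i \<alpha> a) (cn G n i \<alpha> b)"
    and conn_comp_gt: "\<lbrakk>composable G n j a b; j < i; i \<le> n\<rbrakk> \<Longrightarrow>
        cn G n i \<alpha> (cp G n j a b) = cp G (Suc n) j (cn G n i \<alpha> a) (cn G n i \<alpha> b)"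
    and conn_comp_pos: "composable G n j a b \<Longrightarrow>
        cn G n j Pos (cp G n j a b) =
          cp G (Suc n) (Suc j) (cp G (Suc n) j (cn G n j Pos a) (dg G n j a))
                               (cp G (Suc n) j (dg G n (Suc j) a) (cn G n j Pos b))"
    and conn_comp_neg: "composable G n j a b \<Longrightarrow>
        cn G n j Neg (cp G n j a b) =
          cp G (Suc n) (Suc j) (cp G (Suc n) j (cn G n j Neg a) (dg G n (Suc j) b))
                               (cp G (Suc n) j (dg G n j b) (cn G n j Neg b))"
    and comp_assoc: "\<lbrakk>composable G n j a b; composable G n j b c\<rbrakk> \<Longrightarrow>
        cp G n j (cp G n j a b) c = cp G n j a (cp G n j b c)"
    and comp_left_id: "\<lbrakk>x \<in> cell G n; 1 \<le> j; j \<le> n\<rbrakk> \<Longrightarrow>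
        cp G n j (dg G (n - 1) j (fc G n j Neg x)) x = x"
    and comp_right_id: "\<lbrakk>x \<in> cell G n; 1 \<le> j; j \<le> n\<rbrakk> \<Longrightarrow>
        cp G n j x (dg G (n - 1) j (fc G n j Pos x)) = x"
    and conn_inv1: "\<lbrakk>x \<in> cell G n; 1 \<le> i; i \<le> n\<rbrakk> \<Longrightarrow>
        cp G (Suc n) i (cn G n i Pos x) (cn G n i Neg x) = dg G n (Suc i) x"
    and conn_inv2: "\<lbrakk>x \<in> cell G n; 1 \<le> i; i \<le> n\<rbrakk> \<Longrightarrow>
        cp G (Suc n) (Suc i) (cn G n i Pos x) (cn G n i Neg x) = dg G n i x"

definition psi :: "'a cubcat \<Rightarrow> nat \<Rightarrow> nat \<Rightarrow> 'a \<Rightarrow> 'a" where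
  "psi G n i x = cp G n (Suc i)
     (cp G n (Suc i) (cn G (n - 1) i Pos (fc G n (Suc i) Neg x)) x)
     (cn G (n - 1) i Neg (fc G n (Suc i) Pos x))"

fun psi_upto :: "'a cubcat \<Rightarrow> nat \<Rightarrow> nat \<Rightarrow> 'a \<Rightarrow> 'a" where
  "psi_upto G n 0 x = x"
| "psi_upto G n (Suc k) x = psi G n (Suc k) (psi_upto G n k x)"

definition Psi :: "'a cubcat \<Rightarrow> nat \<Rightarrow> nat \<Rightarrow> 'a \<Rightarrow> 'a" where
  "Psi G n r x = psi_upto G n (r - 1) x"

fun Phi_upto :: "'a cubcat \<Rightarrow> nat \<Rightarrow> nat \<Rightarrow> 'a \<Rightarrow> 'a" where
  "Phi_upto G n 0 x = x"
| "Phi_upto G n (Suc k) x = Phi_upto G n k (Psi G n (Suc k) x)"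

definition Phi :: "'a cubcat \<Rightarrow> nat \<Rightarrow> 'a \<Rightarrow> 'a" where
  "Phi G n x = Phi_upto G n n x"

fun faces1 :: "'a cubcat \<Rightarrow> nat \<Rightarrow> nat \<Rightarrow> sgn \<Rightarrow> 'a \<Rightarrow> 'a" where
  "faces1 G n 0 \<alpha> x = x"
| "faces1 G n (Suc k) \<alpha> x = fc G (n - k) 1 \<alpha> (faces1 G n k \<alpha> x)"

fun degs1 :: "'a cubcat \<Rightarrow> nat \<Rightarrow> nat \<Rightarrow> 'a \<Rightarrow> 'a" where
  "degs1 G m 0 y = y"
| "degs1 G m (Suc k) y = dg G (m + k) 1 (degs1 G m k y)"

text \<open>The globular source/target maps d^a_p on the omega-category \<Phi>_n(G_n).\<close>
definition glob_bd :: "'a cubcat \<Rightarrow> nat \<Rightarrow> nat \<Rightarrow> sgn \<Rightarrow> 'a \<Rightarrow> 'a" where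
  "glob_bd G n p \<alpha> u = (if p < n then degs1 G p (n - p) (faces1 G n (n - p) \<alpha> u) else u)"

text \<open>gamma G is the colimit of the chain \<Phi>_0(G_0) \<rightarrow> \<Phi>_1(G_1) \<rightarrow> ... along \<epsilon>_1.
  An element is represented by a pair (n, u) with u in \<Phi>_n(G_n); two representatives
  are equal in the colimit iff they become equal at some later stage.\<close>
definition gamma_eq :: "'a cubcat \<Rightarrow> nat \<times> 'a \<Rightarrow> nat \<times> 'a \<Rightarrow> bool" where
  "gamma_eq G nu mv \<longleftrightarrow> (\<exists>k. fst nu \<le> k \<and> fst mv \<le> k \<and>
      degs1 G (fst nu) (k - fst nu) (snd nu) = degs1 G (fst mv) (k - fst mv) (snd mv))"

definition gamma_bd :: "'a cubcat \<Rightarrow> nat \<Rightarrow> sgn \<Rightarrow> nat \<times> 'a \<Rightarrow> nat \<times> 'a" where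
  "gamma_bd G p \<alpha> nu = (fst nu, glob_bd G (fst nu) p \<alpha> (snd nu))"

definition gamma_dim :: "'a cubcat \<Rightarrow> nat \<times> 'a \<Rightarrow> nat" where
  "gamma_dim G nu = (LEAST p. gamma_eq G (gamma_bd G p Neg nu) nu \<and> gamma_eq G (gamma_bd G p Pos nu) nu)"

definition thin :: "'a cubcat \<Rightarrow> nat \<Rightarrow> 'a \<Rightarrow> bool" where
  "thin G n x \<longleftrightarrow> gamma_dim G (n, Phi G n x) < n"

inductive_set deg_conn_composites :: "'a cubcat \<Rightarrow> nat \<Rightarrow> 'a set" for G n where
  deg: "\<lbrakk>y \<in> cell G (n - 1); 1 \<le> n; 1 \<le> i; i \<le> n\<rbrakk> \<Longrightarrow> dg G (n - 1) i y \<in> deg_conn_composites G n"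
| conn: "\<lbrakk>z \<in> cell G (n - 1); 1 \<le> n; 1 \<le> j; j \<le> n - 1\<rbrakk> \<Longrightarrow> cn G (n - 1) j \<alpha> z \<in> deg_conn_composites G n"
| comp: "\<lbrakk>a \<in> deg_conn_composites G n; b \<in> deg_conn_composites G n; composable G n k a b\<rbrakk>
          \<Longrightarrow> cp G n k a b \<in> deg_conn_composites G n"

end

theory Submission
  imports Defs
begin

context cubical_omega_cat_conn
begin

lemma fc_cl[simp]: "x \<in> cell G (Suc n) \<Longrightarrow> 1 \<le> i \<Longrightarrow> i \<le> Suc n \<Longrightarrow> fc G (Suc n) i \<alpha> x \<in> cell G n"
  using face_closed[of x "Suc n" i \<alpha>] by simp
lemma dg_cl[simp]: "x \<in> cell G n \<Longrightarrow> 1 \<le> i \<Longrightarrow> i \<le> Suc n \<Longrightarrow> dg G n i x \<in> cell G (Suc n)"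
  by (rule deg_closed)
lemma cn_cl[simp]: "x \<in> cell G n \<Longrightarrow> 1 \<le> i \<Longrightarrow> i \<le> n \<Longrightarrow> cn G n i \<alpha> x \<in> cell G (Suc n)"
  by (rule conn_closed)
lemma cp_cl[simp]: "composable G n j a b \<Longrightarrow> cp G n j a b \<in> cell G n"
  by (rule comp_closed)

declare composable_def[simp]

lemma fcfc[simp]: "x \<in> cell G (Suc (Suc n)) \<Longrightarrow> 1 \<le> i \<Longrightarrow> i < j \<Longrightarrow> j \<le> Suc (Suc n) \<Longrightarrow>
   fc G (Suc n) i \<alpha> (fc G (Suc (Suc n)) j \<beta> x) = fc G (Suc n) (j - 1) \<beta> (fc G (Suc (Suc n)) i \<alpha> x)"
  using face_face[of x "Suc (Suc n)" i j \<alpha> \<beta>] by simp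

lemma fc_dg_eq[simp]: "x \<in> cell G n \<Longrightarrow> 1 \<le> j \<Longrightarrow> j \<le> Suc n \<Longrightarrow> fc G (Suc n) j \<alpha> (dg G n j x) = x"
  by (rule face_deg_eq)
lemma fc_dg_lt[simp]: "x \<in> cell G (Suc n) \<Longrightarrow> 1 \<le> i \<Longrightarrow> i < j \<Longrightarrow> j \<le> Suc (Suc n) \<Longrightarrow>
   fc G (Suc (Suc n)) i \<alpha> (dg G (Suc n) j x) = dg G n (j - 1) (fc G (Suc n) i \<alpha> x)"
  using face_deg_lt[of x "Suc n" i j \<alpha>] by simp
lemma fc_dg_gt[simp]: "x \<in> cell G (Suc n) \<Longrightarrow> 1 \<le> j \<Longrightarrow> j < i \<Longrightarrow> i \<le> Suc (Suc n) \<Longrightarrow>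
   fc G (Suc (Suc n)) i \<alpha> (dg G (Suc n) j x) = dg G n j (fc G (Suc n) (i - 1) \<alpha> x)"
  using face_deg_gt[of x "Suc n" j i \<alpha>] by simp

lemma fc_cn_lt[simp]: "x \<in> cell G (Suc n) \<Longrightarrow> 1 \<le> i \<Longrightarrow> i < j \<Longrightarrow> j \<le> Suc n \<Longrightarrow>
   fc G (Suc (Suc n)) i \<alpha> (cn G (Suc n) j \<beta> x) = cn G n (j - 1) \<beta> (fc G (Suc n) i \<alpha> x)"
  using face_conn_lt[of x "Suc n" i j \<alpha> \<beta>] by simp
lemma fc_cn_gt[simp]: "x \<in> cell G (Suc n) \<Longrightarrow> 1 \<le> j \<Longrightarrow> Suc j < i \<Longrightarrow> i \<le> Suc (Suc n) \<Longrightarrow>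
   fc G (Suc (Suc n)) i \<alpha> (cn G (Suc n) j \<beta> x) = cn G n j \<beta> (fc G (Suc n) (i - 1) \<alpha> x)"
  using face_conn_gt[of x "Suc n" j i \<alpha> \<beta>] by simp
lemma fc_cn_s1[simp]: "x \<in> cell G n \<Longrightarrow> 1 \<le> j \<Longrightarrow> j \<le> n \<Longrightarrow> fc G (Suc n) j \<alpha> (cn G n j \<alpha> x) = x"
  by (rule face_conn_same1)
lemma fc_cn_s2[simp]: "x \<in> cell G n \<Longrightarrow> 1 \<le> j \<Longrightarrow> j \<le> n \<Longrightarrow> fc G (Suc n) (Suc j) \<alpha> (cn G n j \<alpha> x) = x"
  by (rule face_conn_same2)
lemma fc_cn_o1n[simp]: "x \<in> cell G (Suc n) \<Longrightarrow> 1 \<le> j \<Longrightarrow> j \<le> Suc n \<Longrightarrow>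
   fc G (Suc (Suc n)) j Neg (cn G (Suc n) j Pos x) = dg G n j (fc G (Suc n) j Neg x)"
  using face_conn_opp1[of x "Suc n" j Neg] by simp
lemma fc_cn_o1p[simp]: "x \<in> cell G (Suc n) \<Longrightarrow> 1 \<le> j \<Longrightarrow> j \<le> Suc n \<Longrightarrow>
   fc G (Suc (Suc n)) j Pos (cn G (Suc n) j Neg x) = dg G n j (fc G (Suc n) j Pos x)"
  using face_conn_opp1[of x "Suc n" j Pos] by simp
lemma fc_cn_o2n[simp]: "x \<in> cell G (Suc n) \<Longrightarrow> 1 \<le> j \<Longrightarrow> j \<le> Suc n \<Longrightarrow>
   fc G (Suc (Suc n)) (Suc j) Neg (cn G (Suc n) j Pos x) = dg G n j (fc G (Suc n) j Neg x)"
  using face_conn_opp2[of x "Suc n" j Neg] by simp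
lemma fc_cn_o2p[simp]: "x \<in> cell G (Suc n) \<Longrightarrow> 1 \<le> j \<Longrightarrow> j \<le> Suc n \<Longrightarrow>
   fc G (Suc (Suc n)) (Suc j) Pos (cn G (Suc n) j Neg x) = dg G n j (fc G (Suc n) j Pos x)"
  using face_conn_opp2[of x "Suc n" j Pos] by simp

lemma fc_cp_n[simp]: "composable G n j a b \<Longrightarrow> fc G n j Neg (cp G n j a b) = fc G n j Neg a"
  by (rule comp_face_neg)
lemma fc_cp_p[simp]: "composable G n j a b \<Longrightarrow> fc G n j Pos (cp G n j a b) = fc G n j Pos b"
  by (rule comp_face_pos)
lemma fc_cp_lt[simp]: "composable G (Suc n) j a b \<Longrightarrow> 1 \<le> i \<Longrightarrow> i < j \<Longrightarrow>
   fc G (Suc n) i \<alpha> (cp G (Suc n) j a b) = cp G n (j - 1) (fc G (Suc n) i \<alpha> a) (fc G (Suc n) i \<alpha> b)"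
  using comp_face_lt[of "Suc n" j a b i \<alpha>] by simp
lemma fc_cp_gt[simp]: "composable G (Suc n) j a b \<Longrightarrow> j < i \<Longrightarrow> i \<le> Suc n \<Longrightarrow>
   fc G (Suc n) i \<alpha> (cp G (Suc n) j a b) = cp G n j (fc G (Suc n) i \<alpha> a) (fc G (Suc n) i \<alpha> b)"
  using comp_face_gt[of "Suc n" j a b i \<alpha>] by simp

lemma cp_lid[simp]: "x \<in> cell G (Suc n) \<Longrightarrow> 1 \<le> j \<Longrightarrow> j \<le> Suc n \<Longrightarrow> e = dg G n j (fc G (Suc n) j Neg x) \<Longrightarrow>
   cp G (Suc n) j e x = x"
  using comp_left_id[of x "Suc n" j] by simp
lemma cp_rid[simp]: "x \<in> cell G (Suc n) \<Longrightarrow> 1 \<le> j \<Longrightarrow> j \<le> Suc n \<Longrightarrow> e = dg G n j (fc G (Suc n) j Pos x) \<Longrightarrow>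
   cp G (Suc n) j x e = x"
  using comp_right_id[of x "Suc n" j] by simp

lemma deg_deg_norm[simp]: "x \<in> cell G n \<Longrightarrow> 1 \<le> i \<Longrightarrow> i \<le> j \<Longrightarrow> j \<le> Suc n \<Longrightarrow>
  dg G (Suc n) (Suc j) (dg G n i x) = dg G (Suc n) i (dg G n j x)"
  using deg_deg[of x n i j] by simp

lemma conn_inv1'[simp]: "x \<in> cell G n \<Longrightarrow> 1 \<le> i \<Longrightarrow> i \<le> n \<Longrightarrow>
  cp G (Suc n) i (cn G n i Pos x) (cn G n i Neg x) = dg G n (Suc i) x"
  by (rule conn_inv1)
lemma conn_inv2'[simp]: "x \<in> cell G n \<Longrightarrow> 1 \<le> i \<Longrightarrow> i \<le> n \<Longrightarrow>
  cp G (Suc n) (Suc i) (cn G n i Pos x) (cn G n i Neg x) = dg G n i x"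
  by (rule conn_inv2)

lemma cp_assoc[simp]: "composable G n j a b \<Longrightarrow> composable G n j b c \<Longrightarrow> cp G n j (cp G n j a b) c = cp G n j a (cp G n j b c)"
  by (rule comp_assoc)

lemma psi_cl[simp]: "x \<in> cell G (Suc n) \<Longrightarrow> 1 \<le> i \<Longrightarrow> i \<le> n \<Longrightarrow> psi G (Suc n) i x \<in> cell G (Suc n)"
  unfolding psi_def by (simp del: cp_assoc)

lemma psi_fc_i1n[simp]: "x \<in> cell G (Suc (Suc m)) \<Longrightarrow> 1 \<le> i \<Longrightarrow> i \<le> Suc m \<Longrightarrow>
  fc G (Suc (Suc m)) (Suc i) Neg (psi G (Suc (Suc m)) i x) = dg G m i (fc G (Suc m) i Neg (fc G (Suc (Suc m)) i Neg x))"
  unfolding psi_def by (simp del: cp_assoc)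
lemma psi_fc_i1p[simp]: "x \<in> cell G (Suc (Suc m)) \<Longrightarrow> 1 \<le> i \<Longrightarrow> i \<le> Suc m \<Longrightarrow>
  fc G (Suc (Suc m)) (Suc i) Pos (psi G (Suc (Suc m)) i x) = dg G m i (fc G (Suc m) i Pos (fc G (Suc (Suc m)) i Pos x))"
  unfolding psi_def by (simp del: cp_assoc)
lemma psi_fc_in[simp]: "x \<in> cell G (Suc (Suc m)) \<Longrightarrow> 1 \<le> i \<Longrightarrow> i \<le> Suc m \<Longrightarrow>
  fc G (Suc (Suc m)) i Neg (psi G (Suc (Suc m)) i x) = cp G (Suc m) i (fc G (Suc (Suc m)) i Neg x) (fc G (Suc (Suc m)) (Suc i) Pos x)"
  unfolding psi_def by (simp del: cp_assoc)
lemma psi_fc_ip[simp]: "x \<in> cell G (Suc (Suc m)) \<Longrightarrow> 1 \<le> i \<Longrightarrow> i \<le> Suc m \<Longrightarrow>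
  fc G (Suc (Suc m)) i Pos (psi G (Suc (Suc m)) i x) = cp G (Suc m) i (fc G (Suc (Suc m)) (Suc i) Neg x) (fc G (Suc (Suc m)) i Pos x)"
  unfolding psi_def by (simp del: cp_assoc)
lemma psi_fc_lt[simp]: "x \<in> cell G (Suc (Suc m)) \<Longrightarrow> 1 \<le> k \<Longrightarrow> k < i \<Longrightarrow> i \<le> Suc m \<Longrightarrow>
  fc G (Suc (Suc m)) k \<alpha> (psi G (Suc (Suc m)) i x) = psi G (Suc m) (i - 1) (fc G (Suc (Suc m)) k \<alpha> x)"
  unfolding psi_def by (simp del: cp_assoc)
lemma psi_fc_gt[simp]: "x \<in> cell G (Suc (Suc m)) \<Longrightarrow> 1 \<le> i \<Longrightarrow> Suc i < k \<Longrightarrow> k \<le> Suc (Suc m) \<Longrightarrow>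
  fc G (Suc (Suc m)) k \<alpha> (psi G (Suc (Suc m)) i x) = psi G (Suc m) i (fc G (Suc (Suc m)) k \<alpha> x)"
  unfolding psi_def by (simp del: cp_assoc)

end

fun hc :: "'a cubcat \<Rightarrow> nat \<Rightarrow> nat \<Rightarrow> 'a list \<Rightarrow> 'a" where
  "hc G n h [] = undefined"
| "hc G n h [a] = a"
| "hc G n h (a # b # as) = cp G n h a (hc G n h (b # as))"

fun hchain :: "'a cubcat \<Rightarrow> nat \<Rightarrow> nat \<Rightarrow> 'a list \<Rightarrow> bool" where
  "hchain G n h [] = False"
| "hchain G n h [a] = (a \<in> cell G n \<and> 1 \<le> h \<and> h \<le> n)"
| "hchain G n h (a # b # as) = (a \<in> cell G n \<and> fc G n h Pos a = fc G n h Neg b \<and> hchain G n h (b # as))"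

context cubical_omega_cat_conn
begin

lemma hchain_props: "hchain G n h as \<Longrightarrow> 1 \<le> h \<and> h \<le> n \<and> (\<forall>a\<in>set as. a \<in> cell G n)"
  by (induction as rule: induct_list012) auto

lemma hc_all: "hchain G n h as \<Longrightarrow> hc G n h as \<in> cell G n \<and> fc G n h Neg (hc G n h as) = fc G n h Neg (hd as)
   \<and> fc G n h Pos (hc G n h as) = fc G n h Pos (last as)"
proof (induction as rule: induct_list012)
  case (3 a b as)
  then show ?case using hchain_props[of n h "b # as"] by auto
qed auto

lemma hc_cl[simp]: "hchain G n h as \<Longrightarrow> hc G n h as \<in> cell G n" using hc_all by blast
lemma hc_fn[simp]: "hchain G n h as \<Longrightarrow> fc G n h Neg (hc G n h as) = fc G n h Neg (hd as)" using hc_all by blast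
lemma hc_fp[simp]: "hchain G n h as \<Longrightarrow> fc G n h Pos (hc G n h as) = fc G n h Pos (last as)" using hc_all by blast

lemma hc_fk: "hchain G (Suc n) h as \<Longrightarrow> k \<noteq> h \<Longrightarrow> 1 \<le> k \<Longrightarrow> k \<le> Suc n \<Longrightarrow>
  hchain G n (if k < h then h - 1 else h) (map (fc G (Suc n) k \<alpha>) as) \<and>
  fc G (Suc n) k \<alpha> (hc G (Suc n) h as) = hc G n (if k < h then h - 1 else h) (map (fc G (Suc n) k \<alpha>) as)"
proof (induction as rule: induct_list012)
  case (2 a)
  then show ?case by auto
next
  case (3 a b as)
  have hp: "1 \<le> h" "h \<le> Suc n" "b \<in> cell G (Suc n)" "a \<in> cell G (Suc n)" using hchain_props[OF 3(3)] by auto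
  have IH: "hchain G n (if k < h then h - 1 else h) (map (fc G (Suc n) k \<alpha>) (b # as)) \<and>
   fc G (Suc n) k \<alpha> (hc G (Suc n) h (b # as)) = hc G n (if k < h then h - 1 else h) (map (fc G (Suc n) k \<alpha>) (b # as))"
    using 3 by auto
  have cb: "hc G (Suc n) h (b # as) \<in> cell G (Suc n)" "fc G (Suc n) h Neg (hc G (Suc n) h (b # as)) = fc G (Suc n) h Neg b"
    using 3 by auto
  show ?case
  proof (cases "k < h")
    case True
    have "fc G n (h - 1) Pos (fc G (Suc n) k \<alpha> a) = fc G n (h - 1) Neg (fc G (Suc n) k \<alpha> b)"
      using 3 True hp face_face[of a "Suc n" k h \<alpha> Pos] face_face[of b "Suc n" k h \<alpha> Neg] by simp
    then show ?thesis using 3 True hp IH cb by auto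
  next
    case False
    then have kh: "h < k" using 3 by auto
    have "fc G n h Pos (fc G (Suc n) k \<alpha> a) = fc G n h Neg (fc G (Suc n) k \<alpha> b)"
      using 3 kh hp face_face[of a "Suc n" h k Pos \<alpha>] face_face[of b "Suc n" h k Neg \<alpha>] by simp
    then show ?thesis using 3 False kh hp IH cb by auto
  qed
qed auto

lemma map_fc_eq: "list_all2 (\<lambda>a b. fc G m v Pos a = fc G m v Neg b) as bs \<Longrightarrow>
   map (fc G m v Pos) as = map (fc G m v Neg) bs"
  by (induction as bs rule: list_all2_induct) auto

lemma grid2: "hchain G (Suc n) h as \<Longrightarrow> hchain G (Suc n) h bs \<Longrightarrow> h \<noteq> v \<Longrightarrow> 1 \<le> v \<Longrightarrow> v \<le> Suc n \<Longrightarrow>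
   list_all2 (\<lambda>a b. fc G (Suc n) v Pos a = fc G (Suc n) v Neg b) as bs \<Longrightarrow>
   hchain G (Suc n) h (map2 (cp G (Suc n) v) as bs) \<and>
   cp G (Suc n) v (hc G (Suc n) h as) (hc G (Suc n) h bs) = hc G (Suc n) h (map2 (cp G (Suc n) v) as bs)"
proof (induction as arbitrary: bs rule: induct_list012)
  case (2 a)
  then obtain b where "bs = [b]" by (cases bs) (auto simp: list_all2_Cons1)
  then show ?case using 2 by auto
next
  case (3 a a' as)
  from 3(8) obtain b b' bs' where bs: "bs = b # b' # bs'"
    by (auto simp: list_all2_Cons1)
  have hp: "1 \<le> h" "h \<le> Suc n" "a \<in> cell G (Suc n)" "b \<in> cell G (Suc n)" 
    using hchain_props[OF 3(3)] hchain_props[OF 3(4)] bs by auto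
  have ch1: "hchain G (Suc n) h (a' # as)" "hchain G (Suc n) h (b' # bs')" using 3 bs by auto
  have la: "list_all2 (\<lambda>a b. fc G (Suc n) v Pos a = fc G (Suc n) v Neg b) (a' # as) (b' # bs')"
    and ab: "fc G (Suc n) v Pos a = fc G (Suc n) v Neg b" using 3(8) bs by auto
  have IH: "hchain G (Suc n) h (map2 (cp G (Suc n) v) (a' # as) (b' # bs')) \<and>
     cp G (Suc n) v (hc G (Suc n) h (a' # as)) (hc G (Suc n) h (b' # bs')) = hc G (Suc n) h (map2 (cp G (Suc n) v) (a' # as) (b' # bs'))"
    using 3(2)[OF ch1(1) ch1(2) 3(5,6,7) la] by simp
  have fk1: "fc G (Suc n) v Pos (hc G (Suc n) h (a' # as)) = fc G (Suc n) v Neg (hc G (Suc n) h (b' # bs'))"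
  proof -
    have e1: "fc G (Suc n) v Pos (hc G (Suc n) h (a' # as)) = hc G n (if v < h then h - 1 else h) (map (fc G (Suc n) v Pos) (a' # as))"
      using hc_fk[OF ch1(1) 3(5)[symmetric] 3(6,7)] by blast
    have e2: "fc G (Suc n) v Neg (hc G (Suc n) h (b' # bs')) = hc G n (if v < h then h - 1 else h) (map (fc G (Suc n) v Neg) (b' # bs'))"
      using hc_fk[OF ch1(2) 3(5)[symmetric] 3(6,7)] by blast
    show ?thesis using e1 e2 map_fc_eq[OF la] by simp
  qed
  have cA: "hc G (Suc n) h (a' # as) \<in> cell G (Suc n)" "hc G (Suc n) h (b' # bs') \<in> cell G (Suc n)"
    using ch1 by auto
  have fnA: "fc G (Suc n) h Neg (hc G (Suc n) h (a' # as)) = fc G (Suc n) h Neg a'"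
       "fc G (Suc n) h Neg (hc G (Suc n) h (b' # bs')) = fc G (Suc n) h Neg b'" using ch1 by auto
  have inter: "cp G (Suc n) v (cp G (Suc n) h a (hc G (Suc n) h (a' # as))) (cp G (Suc n) h b (hc G (Suc n) h (b' # bs')))
     = cp G (Suc n) h (cp G (Suc n) v a b) (cp G (Suc n) v (hc G (Suc n) h (a' # as)) (hc G (Suc n) h (b' # bs')))"
    apply (rule interchange)
    using 3 bs hp cA fnA ab fk1 by auto
  have hab: "fc G (Suc n) h Pos (cp G (Suc n) v a b) = fc G (Suc n) h Neg (cp G (Suc n) v a' b')"
  proof (cases "h < v")
    case True
    then show ?thesis using 3 bs hp ab comp_face_lt[of "Suc n" v a b h Pos] comp_face_lt[of "Suc n" v a' b' h Neg] la
      hchain_props[OF ch1(1)] hchain_props[OF ch1(2)] by auto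
  next
    case False
    then have "v < h" using 3 by auto
    then show ?thesis using 3 bs hp ab comp_face_gt[of "Suc n" v a b h Pos] comp_face_gt[of "Suc n" v a' b' h Neg] la
      hchain_props[OF ch1(1)] hchain_props[OF ch1(2)] by auto
  qed
  show ?case using IH inter bs hab hp ab 3(6,7) by auto
qed auto

end

context cubical_omega_cat_conn
begin

lemma recovery:
  assumes z: "z \<in> cell G (Suc (Suc m))" and i: "1 \<le> i" "i \<le> Suc m"
  shows "cp G (Suc (Suc m)) i (cp G (Suc (Suc m)) i
     (cp G (Suc (Suc m)) (Suc i) (dg G (Suc m) i (fc G (Suc (Suc m)) i Neg z)) (cn G (Suc m) i Pos (fc G (Suc (Suc m)) (Suc i) Pos z)))
     (psi G (Suc (Suc m)) i z))
     (cp G (Suc (Suc m)) (Suc i) (cn G (Suc m) i Neg (fc G (Suc (Suc m)) (Suc i) Neg z)) (dg G (Suc m) i (fc G (Suc (Suc m)) i Pos z))) = z"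
proof -
  define N where "N = Suc (Suc m)"
  define a where "a = fc G N i Neg z"
  define b where "b = fc G N i Pos z"
  define c where "c = fc G N (Suc i) Neg z"
  define d where "d = fc G N (Suc i) Pos z"
  define V1 where "V1 = dg G (Suc m) i (dg G m i (fc G (Suc m) i Neg a))"
  define W3 where "W3 = dg G (Suc m) i (dg G m i (fc G (Suc m) i Pos b))"
  have P: "psi G N i z = hc G N (Suc i) [cn G (Suc m) i Pos c, z, cn G (Suc m) i Neg d]"
    unfolding psi_def c_def d_def N_def using z i by simp
  have V: "cp G N (Suc i) (dg G (Suc m) i a) (cn G (Suc m) i Pos d) = hc G N (Suc i) [V1, dg G (Suc m) i a, cn G (Suc m) i Pos d]"
    unfolding V1_def a_def d_def N_def using z i by simp
  have W: "cp G N (Suc i) (cn G (Suc m) i Neg c) (dg G (Suc m) i b) = hc G N (Suc i) [cn G (Suc m) i Neg c, dg G (Suc m) i b, W3]"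
    unfolding W3_def b_def c_def N_def using z i by simp
  have g1: "hchain G N (Suc i) (map2 (cp G N i) [V1, dg G (Suc m) i a, cn G (Suc m) i Pos d] [cn G (Suc m) i Pos c, z, cn G (Suc m) i Neg d]) \<and>
     cp G N i (hc G N (Suc i) [V1, dg G (Suc m) i a, cn G (Suc m) i Pos d]) (hc G N (Suc i) [cn G (Suc m) i Pos c, z, cn G (Suc m) i Neg d])
     = hc G N (Suc i) (map2 (cp G N i) [V1, dg G (Suc m) i a, cn G (Suc m) i Pos d] [cn G (Suc m) i Pos c, z, cn G (Suc m) i Neg d])"
    unfolding N_def
    apply (rule grid2)
    using z i unfolding V1_def a_def b_def c_def d_def N_def by auto
  have g2: "cp G N i (hc G N (Suc i) (map2 (cp G N i) [V1, dg G (Suc m) i a, cn G (Suc m) i Pos d] [cn G (Suc m) i Pos c, z, cn G (Suc m) i Neg d]))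
     (hc G N (Suc i) [cn G (Suc m) i Neg c, dg G (Suc m) i b, W3]) =
     hc G N (Suc i) (map2 (cp G N i) (map2 (cp G N i) [V1, dg G (Suc m) i a, cn G (Suc m) i Pos d] [cn G (Suc m) i Pos c, z, cn G (Suc m) i Neg d])
        [cn G (Suc m) i Neg c, dg G (Suc m) i b, W3])"
    unfolding N_def
    apply (rule grid2[THEN conjunct2])
    using g1 z i unfolding V1_def W3_def a_def b_def c_def d_def N_def by auto
  have fin: "hc G N (Suc i) (map2 (cp G N i) (map2 (cp G N i) [V1, dg G (Suc m) i a, cn G (Suc m) i Pos d] [cn G (Suc m) i Pos c, z, cn G (Suc m) i Neg d])
        [cn G (Suc m) i Neg c, dg G (Suc m) i b, W3]) = z"
    unfolding V1_def W3_def a_def b_def c_def d_def N_def using z i by simp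
  show ?thesis using P V W g1 g2 fin unfolding a_def b_def c_def d_def N_def by simp
qed

end

context cubical_omega_cat_conn
begin

abbreviation "DC \<equiv> deg_conn_composites G"

lemma dgD: "y \<in> cell G m \<Longrightarrow> 1 \<le> i \<Longrightarrow> i \<le> Suc m \<Longrightarrow> dg G m i y \<in> DC (Suc m)"
  using deg_conn_composites.deg[of y G "Suc m" i] by simp
lemma cnD: "z \<in> cell G m \<Longrightarrow> 1 \<le> j \<Longrightarrow> j \<le> m \<Longrightarrow> cn G m j \<alpha> z \<in> DC (Suc m)"
  using deg_conn_composites.conn[of z G "Suc m" j] by simp
lemma cpD: "a \<in> DC n \<Longrightarrow> b \<in> DC n \<Longrightarrow> composable G n k a b \<Longrightarrow> cp G n k a b \<in> DC n"
  by (rule deg_conn_composites.comp)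

lemma DC_cell: "x \<in> DC n \<Longrightarrow> x \<in> cell G n"
proof (induction rule: deg_conn_composites.induct)
  case (deg y i)
  then show ?case using deg_closed[of y "n - 1" i] by simp
next
  case (conn z j \<alpha>)
  then show ?case using conn_closed[of z "n - 1" j \<alpha>] by simp
qed simp

lemma psi_D_rev:
  assumes z: "z \<in> cell G (Suc (Suc m))" and i: "1 \<le> i" "i \<le> Suc m" and p: "psi G (Suc (Suc m)) i z \<in> DC (Suc (Suc m))"
  shows "z \<in> DC (Suc (Suc m))"
proof -
  have "cp G (Suc (Suc m)) i (cp G (Suc (Suc m)) i
     (cp G (Suc (Suc m)) (Suc i) (dg G (Suc m) i (fc G (Suc (Suc m)) i Neg z)) (cn G (Suc m) i Pos (fc G (Suc (Suc m)) (Suc i) Pos z)))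
     (psi G (Suc (Suc m)) i z))
     (cp G (Suc (Suc m)) (Suc i) (cn G (Suc m) i Neg (fc G (Suc (Suc m)) (Suc i) Neg z)) (dg G (Suc m) i (fc G (Suc (Suc m)) i Pos z)))
     \<in> DC (Suc (Suc m))"
    apply (intro cpD dgD cnD p)
    using z i by (simp_all del: cp_assoc)
  then show ?thesis using recovery[OF z i] by simp
qed

lemma psi_upto_cl: "x \<in> cell G n \<Longrightarrow> k < n \<Longrightarrow> psi_upto G n k x \<in> cell G n"
proof (induction k)
  case (Suc k)
  then obtain m where "n = Suc (Suc m)" by (cases n; cases "n - 1") auto
  then show ?case using Suc by simp
qed simp

lemma psi_upto_D: "x \<in> cell G n \<Longrightarrow> k < n \<Longrightarrow> psi_upto G n k x \<in> DC n \<Longrightarrow> x \<in> DC n"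
proof (induction k)
  case (Suc k)
  then obtain m where n: "n = Suc (Suc m)" by (cases n; cases "n - 1") auto
  have "psi_upto G n k x \<in> DC n"
    using psi_D_rev[of "psi_upto G n k x" m "Suc k"] Suc psi_upto_cl[of x n k] n by simp
  then show ?case using Suc by simp
qed simp

lemma Psi_cl: "x \<in> cell G n \<Longrightarrow> r \<le> n \<Longrightarrow> Psi G n r x \<in> cell G n"
  unfolding Psi_def by (cases r) (auto intro: psi_upto_cl)

lemma Phi_upto_cl: "x \<in> cell G n \<Longrightarrow> k \<le> n \<Longrightarrow> Phi_upto G n k x \<in> cell G n"
  by (induction k arbitrary: x) (auto simp: Psi_cl)

lemma Phi_upto_D: "x \<in> cell G n \<Longrightarrow> k \<le> n \<Longrightarrow> Phi_upto G n k x \<in> DC n \<Longrightarrow> x \<in> DC n"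
proof (induction k arbitrary: x)
  case (Suc k)
  have "Psi G n (Suc k) x \<in> DC n" using Suc Psi_cl by simp
  then show ?case using psi_upto_D[of x n k] Suc(2,3) unfolding Psi_def by simp
qed simp

lemma Phi_cl: "x \<in> cell G n \<Longrightarrow> Phi G n x \<in> cell G n"
  unfolding Phi_def by (rule Phi_upto_cl) auto

lemma Phi_D: "x \<in> cell G n \<Longrightarrow> Phi G n x \<in> DC n \<Longrightarrow> x \<in> DC n"
  unfolding Phi_def by (rule Phi_upto_D) auto

lemma degs1_cl: "y \<in> cell G m \<Longrightarrow> degs1 G m k y \<in> cell G (m + k)"
  by (induction k) auto

lemma degs1_inj: "a \<in> cell G m \<Longrightarrow> b \<in> cell G m \<Longrightarrow> degs1 G m k a = degs1 G m k b \<Longrightarrow> a = b"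
proof (induction k)
  case (Suc k)
  have "fc G (Suc (m + k)) 1 Neg (dg G (m + k) 1 (degs1 G m k a)) = fc G (Suc (m + k)) 1 Neg (dg G (m + k) 1 (degs1 G m k b))"
    using Suc by simp
  then show ?case using Suc degs1_cl[of a m k] degs1_cl[of b m k] by simp
qed simp

lemma faces1_cl: "x \<in> cell G n \<Longrightarrow> k \<le> n \<Longrightarrow> faces1 G n k \<alpha> x \<in> cell G (n - k)"
proof (induction k)
  case (Suc k)
  then obtain m where "n - k = Suc m" by (cases "n - k") auto
  moreover have "n - Suc k = m" using \<open>n - k = Suc m\<close> by arith
  ultimately show ?case using Suc by simp
qed simp

lemma thin_iff:
  assumes x: "x \<in> cell G n"
  shows "thin G n x \<longleftrightarrow> (\<exists>m y. n = Suc m \<and> y \<in> cell G m \<and> Phi G n x = dg G m 1 y)"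
proof -
  define u where "u = Phi G n x"
  have u: "u \<in> cell G n" unfolding u_def using Phi_cl x by simp
  define Q where "Q p \<longleftrightarrow> gamma_eq G (gamma_bd G p Neg (n, u)) (n, u) \<and> gamma_eq G (gamma_bd G p Pos (n, u)) (n, u)" for p
  have geq: "gamma_eq G (n, a) (n, u) \<longleftrightarrow> a = u" if "a \<in> cell G n" for a
  proof
    assume "gamma_eq G (n, a) (n, u)"
    then obtain k where "degs1 G n (k - n) a = degs1 G n (k - n) u" unfolding gamma_eq_def by auto
    then show "a = u" using degs1_inj that u by blast
  next
    assume "a = u" then show "gamma_eq G (n, a) (n, u)" unfolding gamma_eq_def by auto
  qed
  have bd_cl: "glob_bd G n p \<alpha> u \<in> cell G n" for p \<alpha>
  proof (cases "p < n")
    case True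
    have "faces1 G n (n - p) \<alpha> u \<in> cell G p" using faces1_cl[OF u, of "n - p" \<alpha>] True by simp
    then show ?thesis unfolding glob_bd_def using True degs1_cl[of _ p "n - p"] by simp
  qed (simp add: glob_bd_def u)
  have Qiff: "Q p \<longleftrightarrow> glob_bd G n p Neg u = u \<and> glob_bd G n p Pos u = u" for p
    unfolding Q_def gamma_bd_def using geq bd_cl by simp
  have thin_Q: "thin G n x \<longleftrightarrow> (\<exists>p<n. Q p)"
  proof
    assume "thin G n x"
    then have "(LEAST p. Q p) < n" unfolding thin_def gamma_dim_def Q_def u_def by simp
    moreover have "Q n" unfolding Qiff glob_bd_def by simp
    then have "Q (LEAST p. Q p)" by (rule LeastI)
    ultimately show "\<exists>p<n. Q p" by blast
  next
    assume "\<exists>p<n. Q p"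
    then obtain p where "p < n" "Q p" by blast
    then have "(LEAST p. Q p) < n" using Least_le[of Q p] by linarith
    then show "thin G n x" unfolding thin_def gamma_dim_def Q_def u_def by simp
  qed
  show ?thesis
  proof
    assume "thin G n x"
    then obtain p where p: "p < n" "Q p" using thin_Q by blast
    then have e: "degs1 G p (n - p) (faces1 G n (n - p) Neg u) = u" using Qiff unfolding glob_bd_def by simp
    obtain r where r: "n - p = Suc r" using p by (cases "n - p") auto
    have m: "n = Suc (p + r)" using r p by simp
    have "faces1 G n (n - p) Neg u \<in> cell G p" using faces1_cl[OF u, of "n - p" Neg] p by simp
    then have "degs1 G p r (faces1 G n (n - p) Neg u) \<in> cell G (p + r)" by (rule degs1_cl)
    moreover have "u = dg G (p + r) 1 (degs1 G p r (faces1 G n (n - p) Neg u))" using e r by simp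
    ultimately show "\<exists>m y. n = Suc m \<and> y \<in> cell G m \<and> Phi G n x = dg G m 1 y" using m u_def by blast
  next
    assume "\<exists>m y. n = Suc m \<and> y \<in> cell G m \<and> Phi G n x = dg G m 1 y"
    then obtain m y where my: "n = Suc m" "y \<in> cell G m" "u = dg G m 1 y" unfolding u_def by blast
    have "Q m" unfolding Qiff glob_bd_def using my by simp
    then show "thin G n x" using thin_Q my by blast
  qed
qed

lemma thin_DC: "x \<in> cell G n \<Longrightarrow> thin G n x \<Longrightarrow> x \<in> DC n"
  using thin_iff[of x n] Phi_D[of x n] dgD by fastforce

end

context cubical_omega_cat_conn
begin

lemma deg_comp_le'[simp]: "composable G n j a b \<Longrightarrow> 1 \<le> i \<Longrightarrow> i \<le> j \<Longrightarrow>
  dg G n i (cp G n j a b) = cp G (Suc n) (Suc j) (dg G n i a) (dg G n i b)"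
  by (rule deg_comp_le)
lemma deg_comp_gt'[simp]: "composable G n j a b \<Longrightarrow> j < i \<Longrightarrow> i \<le> Suc n \<Longrightarrow>
  dg G n i (cp G n j a b) = cp G (Suc n) j (dg G n i a) (dg G n i b)"
  by (rule deg_comp_gt)
lemma conn_comp_lt'[simp]: "composable G n j a b \<Longrightarrow> 1 \<le> i \<Longrightarrow> i < j \<Longrightarrow>
  cn G n i \<alpha> (cp G n j a b) = cp G (Suc n) (Suc j) (cn G n i \<alpha> a) (cn G n i \<alpha> b)"
  by (rule conn_comp_lt)
lemma conn_comp_gt'[simp]: "composable G n j a b \<Longrightarrow> j < i \<Longrightarrow> i \<le> n \<Longrightarrow>
  cn G n i \<alpha> (cp G n j a b) = cp G (Suc n) j (cn G n i \<alpha> a) (cn G n i \<alpha> b)"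
  by (rule conn_comp_gt)
lemma conn_deg_lt'[simp]: "x \<in> cell G n \<Longrightarrow> 1 \<le> i \<Longrightarrow> i < j \<Longrightarrow> j \<le> Suc n \<Longrightarrow>
  cn G (Suc n) i \<alpha> (dg G n j x) = dg G (Suc n) (Suc j) (cn G n i \<alpha> x)"
  by (rule conn_deg_lt)
lemma conn_deg_gt'[simp]: "x \<in> cell G n \<Longrightarrow> 1 \<le> j \<Longrightarrow> j < i \<Longrightarrow> i \<le> Suc n \<Longrightarrow>
  cn G (Suc n) i \<alpha> (dg G n j x) = dg G (Suc n) j (cn G n (i - 1) \<alpha> x)"
  by (rule conn_deg_gt)
lemma conn_deg_eq'[simp]: "x \<in> cell G n \<Longrightarrow> 1 \<le> j \<Longrightarrow> j \<le> Suc n \<Longrightarrow>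
  cn G (Suc n) j \<alpha> (dg G n j x) = dg G (Suc n) (Suc j) (dg G n j x)"
  by (rule conn_deg_eq)
lemma conn_conn'[simp]: "x \<in> cell G n \<Longrightarrow> 1 \<le> i \<Longrightarrow> i < j \<Longrightarrow> j \<le> n \<Longrightarrow>
  cn G (Suc n) i \<alpha> (cn G n j \<beta> x) = cn G (Suc n) (Suc j) \<beta> (cn G n i \<alpha> x)"
  by (rule conn_conn)
lemma conn_conn_eq'[simp]: "x \<in> cell G n \<Longrightarrow> 1 \<le> i \<Longrightarrow> i \<le> n \<Longrightarrow>
  cn G (Suc n) i \<alpha> (cn G n i \<alpha> x) = cn G (Suc n) (Suc i) \<alpha> (cn G n i \<alpha> x)"
  by (rule conn_conn_eq)

lemma psi_dg_lt: "y \<in> cell G (Suc m) \<Longrightarrow> 1 \<le> j \<Longrightarrow> j \<le> i \<Longrightarrow> i \<le> m \<Longrightarrow>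
  psi G (Suc (Suc m)) (Suc i) (dg G (Suc m) j y) = dg G (Suc m) j (psi G (Suc m) i y)"
  unfolding psi_def by simp
lemma psi_dg_eq: "y \<in> cell G (Suc m) \<Longrightarrow> 1 \<le> i \<Longrightarrow> i \<le> Suc m \<Longrightarrow>
  psi G (Suc (Suc m)) i (dg G (Suc m) i y) = dg G (Suc m) i y"
  unfolding psi_def by simp
lemma psi_dg_suc: "y \<in> cell G (Suc m) \<Longrightarrow> 1 \<le> i \<Longrightarrow> i \<le> Suc m \<Longrightarrow>
  psi G (Suc (Suc m)) i (dg G (Suc m) (Suc i) y) = dg G (Suc m) i y"
  unfolding psi_def by simp
lemma psi_dg_gt: "y \<in> cell G (Suc m) \<Longrightarrow> 1 \<le> i \<Longrightarrow> Suc i < j \<Longrightarrow> j \<le> Suc (Suc m) \<Longrightarrow>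
  psi G (Suc (Suc m)) i (dg G (Suc m) j y) = dg G (Suc m) j (psi G (Suc m) i y)"
  unfolding psi_def by simp

lemma psi_cn_lt: "z \<in> cell G (Suc m) \<Longrightarrow> 1 \<le> i \<Longrightarrow> Suc i < j \<Longrightarrow> j \<le> Suc m \<Longrightarrow>
  psi G (Suc (Suc m)) i (cn G (Suc m) j \<alpha> z) = cn G (Suc m) j \<alpha> (psi G (Suc m) i z)"
  unfolding psi_def by simp
lemma psi_cn_gt: "z \<in> cell G (Suc m) \<Longrightarrow> 1 \<le> j \<Longrightarrow> j < i \<Longrightarrow> i \<le> m \<Longrightarrow>
  psi G (Suc (Suc m)) (Suc i) (cn G (Suc m) j \<alpha> z) = cn G (Suc m) j \<alpha> (psi G (Suc m) i z)"
  unfolding psi_def by simp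
lemma psi_cn_eq: "z \<in> cell G (Suc m) \<Longrightarrow> 1 \<le> j \<Longrightarrow> j \<le> Suc m \<Longrightarrow>
  psi G (Suc (Suc m)) j (cn G (Suc m) j \<alpha> z) = dg G (Suc m) j z"
  unfolding psi_def by (cases \<alpha>) simp_all

end

context cubical_omega_cat_conn
begin

lemma fcomp: "composable G (Suc n) (Suc j) x y \<Longrightarrow> 1 \<le> k \<Longrightarrow> k \<le> j \<Longrightarrow>
  fc G n j Pos (fc G (Suc n) k \<alpha> x) = fc G n j Neg (fc G (Suc n) k \<alpha> y)"
  using face_face[of x "Suc n" k "Suc j" \<alpha> Pos] face_face[of y "Suc n" k "Suc j" \<alpha> Neg] by auto

lemma psi_alt: "x \<in> cell G (Suc n) \<Longrightarrow> 1 \<le> i \<Longrightarrow> i \<le> n \<Longrightarrow>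
  psi G (Suc n) i x = hc G (Suc n) (Suc i) [cn G n i Pos (fc G (Suc n) (Suc i) Neg x), x, cn G n i Neg (fc G (Suc n) (Suc i) Pos x)]"
  unfolding psi_def by simp

lemma L1a:
  assumes c: "composable G (Suc (Suc m)) j x y" and ij: "j < i" "i \<le> Suc m"
  shows "psi G (Suc (Suc m)) i (cp G (Suc (Suc m)) j x y) = cp G (Suc (Suc m)) j (psi G (Suc (Suc m)) i x) (psi G (Suc (Suc m)) i y)"
proof -
  have x: "x \<in> cell G (Suc (Suc m))" and y: "y \<in> cell G (Suc (Suc m))" and j: "1 \<le> j" using c by auto
  have g: "hchain G (Suc (Suc m)) (Suc i) (map2 (cp G (Suc (Suc m)) j)
     [cn G (Suc m) i Pos (fc G (Suc (Suc m)) (Suc i) Neg x), x, cn G (Suc m) i Neg (fc G (Suc (Suc m)) (Suc i) Pos x)]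
     [cn G (Suc m) i Pos (fc G (Suc (Suc m)) (Suc i) Neg y), y, cn G (Suc m) i Neg (fc G (Suc (Suc m)) (Suc i) Pos y)]) \<and>
   cp G (Suc (Suc m)) j (hc G (Suc (Suc m)) (Suc i) [cn G (Suc m) i Pos (fc G (Suc (Suc m)) (Suc i) Neg x), x, cn G (Suc m) i Neg (fc G (Suc (Suc m)) (Suc i) Pos x)])
     (hc G (Suc (Suc m)) (Suc i) [cn G (Suc m) i Pos (fc G (Suc (Suc m)) (Suc i) Neg y), y, cn G (Suc m) i Neg (fc G (Suc (Suc m)) (Suc i) Pos y)])
   = hc G (Suc (Suc m)) (Suc i) (map2 (cp G (Suc (Suc m)) j)
     [cn G (Suc m) i Pos (fc G (Suc (Suc m)) (Suc i) Neg x), x, cn G (Suc m) i Neg (fc G (Suc (Suc m)) (Suc i) Pos x)]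
     [cn G (Suc m) i Pos (fc G (Suc (Suc m)) (Suc i) Neg y), y, cn G (Suc m) i Neg (fc G (Suc (Suc m)) (Suc i) Pos y)])"
    apply (rule grid2)
    using x y c ij j by auto
  show ?thesis
    using g x y c ij j by (simp add: psi_alt)
qed

lemma L1b:
  assumes c: "composable G (Suc (Suc m)) (Suc j) x y" and ij: "1 \<le> i" "i < j"
  shows "psi G (Suc (Suc m)) i (cp G (Suc (Suc m)) (Suc j) x y) = cp G (Suc (Suc m)) (Suc j) (psi G (Suc (Suc m)) i x) (psi G (Suc (Suc m)) i y)"
proof -
  have x: "x \<in> cell G (Suc (Suc m))" and y: "y \<in> cell G (Suc (Suc m))" and j: "j \<le> Suc m" using c by auto
  note fc1 = fcomp[OF c]
  have g: "hchain G (Suc (Suc m)) (Suc i) (map2 (cp G (Suc (Suc m)) (Suc j)) [cn G (Suc m) i Pos (fc G (Suc (Suc m)) (Suc i) Neg x), x, cn G (Suc m) i Neg (fc G (Suc (Suc m)) (Suc i) Pos x)] [cn G (Suc m) i Pos (fc G (Suc (Suc m)) (Suc i) Neg y), y, cn G (Suc m) i Neg (fc G (Suc (Suc m)) (Suc i) Pos y)]) \<and>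
   cp G (Suc (Suc m)) (Suc j) (hc G (Suc (Suc m)) (Suc i) [cn G (Suc m) i Pos (fc G (Suc (Suc m)) (Suc i) Neg x), x, cn G (Suc m) i Neg (fc G (Suc (Suc m)) (Suc i) Pos x)]) (hc G (Suc (Suc m)) (Suc i) [cn G (Suc m) i Pos (fc G (Suc (Suc m)) (Suc i) Neg y), y, cn G (Suc m) i Neg (fc G (Suc (Suc m)) (Suc i) Pos y)])
   = hc G (Suc (Suc m)) (Suc i) (map2 (cp G (Suc (Suc m)) (Suc j)) [cn G (Suc m) i Pos (fc G (Suc (Suc m)) (Suc i) Neg x), x, cn G (Suc m) i Neg (fc G (Suc (Suc m)) (Suc i) Pos x)] [cn G (Suc m) i Pos (fc G (Suc (Suc m)) (Suc i) Neg y), y, cn G (Suc m) i Neg (fc G (Suc (Suc m)) (Suc i) Pos y)])"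
    apply (rule grid2)
    using x y c ij j fc1 by auto
  show ?thesis
    using g x y c ij j fc1 by (simp add: psi_alt)
qed

lemma L3:
  assumes c: "composable G (Suc (Suc m)) i x y" and ij: "i \<le> Suc m"
  shows "psi G (Suc (Suc m)) i (cp G (Suc (Suc m)) i x y) =
    cp G (Suc (Suc m)) i (cp G (Suc (Suc m)) (Suc i) (psi G (Suc (Suc m)) i x) (dg G (Suc m) i (fc G (Suc (Suc m)) (Suc i) Pos y)))
      (cp G (Suc (Suc m)) (Suc i) (dg G (Suc m) i (fc G (Suc (Suc m)) (Suc i) Neg x)) (psi G (Suc (Suc m)) i y))"
proof -
  have x: "x \<in> cell G (Suc (Suc m))" and y: "y \<in> cell G (Suc (Suc m))" and i: "1 \<le> i" using c by auto
  have a: "cp G (Suc (Suc m)) (Suc i) (psi G (Suc (Suc m)) i x) (dg G (Suc m) i (fc G (Suc (Suc m)) (Suc i) Pos y)) = hc G (Suc (Suc m)) (Suc i) [cn G (Suc m) i Pos (fc G (Suc (Suc m)) (Suc i) Neg x), dg G (Suc m) (Suc i) (fc G (Suc (Suc m)) (Suc i) Neg x), x, cn G (Suc m) i Neg (fc G (Suc (Suc m)) (Suc i) Pos x), dg G (Suc m) i (fc G (Suc (Suc m)) (Suc i) Pos y)]"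
    using x y c ij i by (simp add: psi_alt)
  have b: "cp G (Suc (Suc m)) (Suc i) (dg G (Suc m) i (fc G (Suc (Suc m)) (Suc i) Neg x)) (psi G (Suc (Suc m)) i y) = hc G (Suc (Suc m)) (Suc i) [dg G (Suc m) i (fc G (Suc (Suc m)) (Suc i) Neg x), cn G (Suc m) i Pos (fc G (Suc (Suc m)) (Suc i) Neg y), y, dg G (Suc m) (Suc i) (fc G (Suc (Suc m)) (Suc i) Pos y), cn G (Suc m) i Neg (fc G (Suc (Suc m)) (Suc i) Pos y)]"
    using x y c ij i by (simp add: psi_alt)
  have g: "hchain G (Suc (Suc m)) (Suc i) (map2 (cp G (Suc (Suc m)) i) [cn G (Suc m) i Pos (fc G (Suc (Suc m)) (Suc i) Neg x), dg G (Suc m) (Suc i) (fc G (Suc (Suc m)) (Suc i) Neg x), x, cn G (Suc m) i Neg (fc G (Suc (Suc m)) (Suc i) Pos x), dg G (Suc m) i (fc G (Suc (Suc m)) (Suc i) Pos y)] [dg G (Suc m) i (fc G (Suc (Suc m)) (Suc i) Neg x), cn G (Suc m) i Pos (fc G (Suc (Suc m)) (Suc i) Neg y), y, dg G (Suc m) (Suc i) (fc G (Suc (Suc m)) (Suc i) Pos y), cn G (Suc m) i Neg (fc G (Suc (Suc m)) (Suc i) Pos y)]) \<and>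
   cp G (Suc (Suc m)) i (hc G (Suc (Suc m)) (Suc i) [cn G (Suc m) i Pos (fc G (Suc (Suc m)) (Suc i) Neg x), dg G (Suc m) (Suc i) (fc G (Suc (Suc m)) (Suc i) Neg x), x, cn G (Suc m) i Neg (fc G (Suc (Suc m)) (Suc i) Pos x), dg G (Suc m) i (fc G (Suc (Suc m)) (Suc i) Pos y)]) (hc G (Suc (Suc m)) (Suc i) [dg G (Suc m) i (fc G (Suc (Suc m)) (Suc i) Neg x), cn G (Suc m) i Pos (fc G (Suc (Suc m)) (Suc i) Neg y), y, dg G (Suc m) (Suc i) (fc G (Suc (Suc m)) (Suc i) Pos y), cn G (Suc m) i Neg (fc G (Suc (Suc m)) (Suc i) Pos y)])
   = hc G (Suc (Suc m)) (Suc i) (map2 (cp G (Suc (Suc m)) i) [cn G (Suc m) i Pos (fc G (Suc (Suc m)) (Suc i) Neg x), dg G (Suc m) (Suc i) (fc G (Suc (Suc m)) (Suc i) Neg x), x, cn G (Suc m) i Neg (fc G (Suc (Suc m)) (Suc i) Pos x), dg G (Suc m) i (fc G (Suc (Suc m)) (Suc i) Pos y)] [dg G (Suc m) i (fc G (Suc (Suc m)) (Suc i) Neg x), cn G (Suc m) i Pos (fc G (Suc (Suc m)) (Suc i) Neg y), y, dg G (Suc m) (Suc i) (fc G (Suc (Suc m)) (Suc i) Pos y), cn G (Suc m) i Neg (fc G (Suc (Suc m)) (Suc i) Pos y)])"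
    apply (rule grid2)
    using x y c ij i by auto
  have d: "psi G (Suc (Suc m)) i (cp G (Suc (Suc m)) i x y) = hc G (Suc (Suc m)) (Suc i) (map2 (cp G (Suc (Suc m)) i) [cn G (Suc m) i Pos (fc G (Suc (Suc m)) (Suc i) Neg x), dg G (Suc m) (Suc i) (fc G (Suc (Suc m)) (Suc i) Neg x), x, cn G (Suc m) i Neg (fc G (Suc (Suc m)) (Suc i) Pos x), dg G (Suc m) i (fc G (Suc (Suc m)) (Suc i) Pos y)] [dg G (Suc m) i (fc G (Suc (Suc m)) (Suc i) Neg x), cn G (Suc m) i Pos (fc G (Suc (Suc m)) (Suc i) Neg y), y, dg G (Suc m) (Suc i) (fc G (Suc (Suc m)) (Suc i) Pos y), cn G (Suc m) i Neg (fc G (Suc (Suc m)) (Suc i) Pos y)])"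
    using x y c ij i by (simp add: psi_alt conn_comp_pos conn_comp_neg)
  show ?thesis using a b g d by simp
qed

lemma L2:
  assumes c: "composable G (Suc (Suc m)) (Suc i) x y" and ij: "1 \<le> i" "i \<le> Suc m"
  shows "psi G (Suc (Suc m)) i (cp G (Suc (Suc m)) (Suc i) x y) =
    cp G (Suc (Suc m)) i (cp G (Suc (Suc m)) (Suc i) (dg G (Suc m) i (fc G (Suc (Suc m)) i Neg x)) (psi G (Suc (Suc m)) i y))
      (cp G (Suc (Suc m)) (Suc i) (psi G (Suc (Suc m)) i x) (dg G (Suc m) i (fc G (Suc (Suc m)) i Pos y)))"
proof -
  have x: "x \<in> cell G (Suc (Suc m))" and y: "y \<in> cell G (Suc (Suc m))" using c by auto
  note fc1 = fcomp[OF c]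
  have a: "cp G (Suc (Suc m)) (Suc i) (dg G (Suc m) i (fc G (Suc (Suc m)) i Neg x)) (psi G (Suc (Suc m)) i y) = hc G (Suc (Suc m)) (Suc i) [dg G (Suc m) i (dg G m i (fc G (Suc m) i Neg (fc G (Suc (Suc m)) i Neg x))), dg G (Suc m) i (fc G (Suc (Suc m)) i Neg x), cn G (Suc m) i Pos (fc G (Suc (Suc m)) (Suc i) Pos x), y, cn G (Suc m) i Neg (fc G (Suc (Suc m)) (Suc i) Pos y)]"
    using x y c ij fc1 by (simp add: psi_alt)
  have b: "cp G (Suc (Suc m)) (Suc i) (psi G (Suc (Suc m)) i x) (dg G (Suc m) i (fc G (Suc (Suc m)) i Pos y)) = hc G (Suc (Suc m)) (Suc i) [cn G (Suc m) i Pos (fc G (Suc (Suc m)) (Suc i) Neg x), x, cn G (Suc m) i Neg (fc G (Suc (Suc m)) (Suc i) Pos x), dg G (Suc m) i (fc G (Suc (Suc m)) i Pos y), dg G (Suc m) i (dg G m i (fc G (Suc m) i Pos (fc G (Suc (Suc m)) i Pos y)))]"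
    using x y c ij fc1 by (simp add: psi_alt)
  have g: "hchain G (Suc (Suc m)) (Suc i) (map2 (cp G (Suc (Suc m)) i) [dg G (Suc m) i (dg G m i (fc G (Suc m) i Neg (fc G (Suc (Suc m)) i Neg x))), dg G (Suc m) i (fc G (Suc (Suc m)) i Neg x), cn G (Suc m) i Pos (fc G (Suc (Suc m)) (Suc i) Pos x), y, cn G (Suc m) i Neg (fc G (Suc (Suc m)) (Suc i) Pos y)] [cn G (Suc m) i Pos (fc G (Suc (Suc m)) (Suc i) Neg x), x, cn G (Suc m) i Neg (fc G (Suc (Suc m)) (Suc i) Pos x), dg G (Suc m) i (fc G (Suc (Suc m)) i Pos y), dg G (Suc m) i (dg G m i (fc G (Suc m) i Pos (fc G (Suc (Suc m)) i Pos y)))]) \<and>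
   cp G (Suc (Suc m)) i (hc G (Suc (Suc m)) (Suc i) [dg G (Suc m) i (dg G m i (fc G (Suc m) i Neg (fc G (Suc (Suc m)) i Neg x))), dg G (Suc m) i (fc G (Suc (Suc m)) i Neg x), cn G (Suc m) i Pos (fc G (Suc (Suc m)) (Suc i) Pos x), y, cn G (Suc m) i Neg (fc G (Suc (Suc m)) (Suc i) Pos y)]) (hc G (Suc (Suc m)) (Suc i) [cn G (Suc m) i Pos (fc G (Suc (Suc m)) (Suc i) Neg x), x, cn G (Suc m) i Neg (fc G (Suc (Suc m)) (Suc i) Pos x), dg G (Suc m) i (fc G (Suc (Suc m)) i Pos y), dg G (Suc m) i (dg G m i (fc G (Suc m) i Pos (fc G (Suc (Suc m)) i Pos y)))])
   = hc G (Suc (Suc m)) (Suc i) (map2 (cp G (Suc (Suc m)) i) [dg G (Suc m) i (dg G m i (fc G (Suc m) i Neg (fc G (Suc (Suc m)) i Neg x))), dg G (Suc m) i (fc G (Suc (Suc m)) i Neg x), cn G (Suc m) i Pos (fc G (Suc (Suc m)) (Suc i) Pos x), y, cn G (Suc m) i Neg (fc G (Suc (Suc m)) (Suc i) Pos y)] [cn G (Suc m) i Pos (fc G (Suc (Suc m)) (Suc i) Neg x), x, cn G (Suc m) i Neg (fc G (Suc (Suc m)) (Suc i) Pos x), dg G (Suc m) i (fc G (Suc (Suc m)) i Pos y), dg G (Suc m) i (dg G m i (fc G (Suc m) i Pos (fc G (Suc (Suc m)) i Pos y)))])"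
    apply (rule grid2)
    using x y c ij fc1 by auto
  have d: "psi G (Suc (Suc m)) i (cp G (Suc (Suc m)) (Suc i) x y) = hc G (Suc (Suc m)) (Suc i) (map2 (cp G (Suc (Suc m)) i) [dg G (Suc m) i (dg G m i (fc G (Suc m) i Neg (fc G (Suc (Suc m)) i Neg x))), dg G (Suc m) i (fc G (Suc (Suc m)) i Neg x), cn G (Suc m) i Pos (fc G (Suc (Suc m)) (Suc i) Pos x), y, cn G (Suc m) i Neg (fc G (Suc (Suc m)) (Suc i) Pos y)] [cn G (Suc m) i Pos (fc G (Suc (Suc m)) (Suc i) Neg x), x, cn G (Suc m) i Neg (fc G (Suc (Suc m)) (Suc i) Pos x), dg G (Suc m) i (fc G (Suc (Suc m)) i Pos y), dg G (Suc m) i (dg G m i (fc G (Suc m) i Pos (fc G (Suc (Suc m)) i Pos y)))])"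
    using x y c ij fc1 by (simp add: psi_alt)
  show ?thesis using a b g d by simp
qed

end

context cubical_omega_cat_conn
begin

lemma Tlem:
  assumes c: "c \<in> cell G (Suc k)" and i: "1 \<le> i" "i \<le> Suc k"
  shows "cn G (Suc (Suc k)) i Neg (cn G (Suc k) i Pos c) =
    cp G (Suc (Suc (Suc k))) (Suc (Suc i)) (dg G (Suc (Suc k)) (Suc i) (cn G (Suc k) i Pos c))
      (cn G (Suc (Suc k)) (Suc i) Pos (cn G (Suc k) i Neg c))"
proof -
  define a where "a = cn G (Suc k) i Pos c"
  define b where "b = cn G (Suc k) i Neg c"
  have ab: "a \<in> cell G (Suc (Suc k))" "b \<in> cell G (Suc (Suc k))" unfolding a_def b_def using c i by auto
  have e1: "cn G (Suc (Suc k)) i Neg a = cp G (Suc (Suc (Suc k))) (Suc (Suc i))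
     (cp G (Suc (Suc (Suc k))) (Suc i) (dg G (Suc (Suc k)) (Suc i) a) (cn G (Suc (Suc k)) i Neg a))
     (cp G (Suc (Suc (Suc k))) (Suc i) (cn G (Suc (Suc k)) (Suc i) Pos b) (cn G (Suc (Suc k)) (Suc i) Neg b))"
    unfolding a_def b_def using c i by simp
  have e2: "cp G (Suc (Suc (Suc k))) (Suc (Suc i))
     (cp G (Suc (Suc (Suc k))) (Suc i) (dg G (Suc (Suc k)) (Suc i) a) (cn G (Suc (Suc k)) i Neg a))
     (cp G (Suc (Suc (Suc k))) (Suc i) (cn G (Suc (Suc k)) (Suc i) Pos b) (cn G (Suc (Suc k)) (Suc i) Neg b))
   = cp G (Suc (Suc (Suc k))) (Suc i)
     (cp G (Suc (Suc (Suc k))) (Suc (Suc i)) (dg G (Suc (Suc k)) (Suc i) a) (cn G (Suc (Suc k)) (Suc i) Pos b))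
     (cp G (Suc (Suc (Suc k))) (Suc (Suc i)) (cn G (Suc (Suc k)) i Neg a) (cn G (Suc (Suc k)) (Suc i) Neg b))"
    apply (rule interchange)
    unfolding a_def b_def using c i by simp_all
  have e3: "cp G (Suc (Suc (Suc k))) (Suc (Suc i)) (cn G (Suc (Suc k)) i Neg a) (cn G (Suc (Suc k)) (Suc i) Neg b)
     = dg G (Suc (Suc k)) i (dg G (Suc k) i c)"
  proof -
    have "cn G (Suc (Suc k)) i Neg (cp G (Suc (Suc k)) (Suc i) a b) = cp G (Suc (Suc (Suc k))) (Suc (Suc i)) (cn G (Suc (Suc k)) i Neg a) (cn G (Suc (Suc k)) i Neg b)"
      by (rule conn_comp_lt) (use c i ab in \<open>simp_all add: a_def b_def\<close>)
    moreover have "cn G (Suc (Suc k)) i Neg b = cn G (Suc (Suc k)) (Suc i) Neg b"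
      unfolding b_def using c i by simp
    moreover have "cp G (Suc (Suc k)) (Suc i) a b = dg G (Suc k) i c" unfolding a_def b_def using c i by simp
    ultimately show ?thesis using c i by simp
  qed
  show ?thesis
    using e1 e2 e3 c i unfolding a_def[symmetric] b_def[symmetric]
    by (simp add: a_def b_def)
qed

lemma Tlem':
  assumes c: "c \<in> cell G (Suc k)" and i: "1 \<le> i" "i \<le> Suc k"
  shows "cn G (Suc (Suc k)) i Pos (cn G (Suc k) i Neg c) =
    cp G (Suc (Suc (Suc k))) (Suc (Suc i)) (cn G (Suc (Suc k)) (Suc i) Neg (cn G (Suc k) i Pos c))
      (dg G (Suc (Suc k)) (Suc i) (cn G (Suc k) i Neg c))"
proof -
  define a where "a = cn G (Suc k) i Pos c"
  define b where "b = cn G (Suc k) i Neg c"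
  have ab: "a \<in> cell G (Suc (Suc k))" "b \<in> cell G (Suc (Suc k))" unfolding a_def b_def using c i by auto
  have e1: "cn G (Suc (Suc k)) i Pos b = cp G (Suc (Suc (Suc k))) (Suc (Suc i))
     (cp G (Suc (Suc (Suc k))) (Suc i) (cn G (Suc (Suc k)) (Suc i) Pos a) (cn G (Suc (Suc k)) (Suc i) Neg a))
     (cp G (Suc (Suc (Suc k))) (Suc i) (cn G (Suc (Suc k)) i Pos b) (dg G (Suc (Suc k)) (Suc i) b))"
    unfolding a_def b_def using c i by simp
  have e2: "cp G (Suc (Suc (Suc k))) (Suc (Suc i))
     (cp G (Suc (Suc (Suc k))) (Suc i) (cn G (Suc (Suc k)) (Suc i) Pos a) (cn G (Suc (Suc k)) (Suc i) Neg a))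
     (cp G (Suc (Suc (Suc k))) (Suc i) (cn G (Suc (Suc k)) i Pos b) (dg G (Suc (Suc k)) (Suc i) b))
   = cp G (Suc (Suc (Suc k))) (Suc i)
     (cp G (Suc (Suc (Suc k))) (Suc (Suc i)) (cn G (Suc (Suc k)) (Suc i) Pos a) (cn G (Suc (Suc k)) i Pos b))
     (cp G (Suc (Suc (Suc k))) (Suc (Suc i)) (cn G (Suc (Suc k)) (Suc i) Neg a) (dg G (Suc (Suc k)) (Suc i) b))"
    apply (rule interchange)
    unfolding a_def b_def using c i by simp_all
  have e3: "cp G (Suc (Suc (Suc k))) (Suc (Suc i)) (cn G (Suc (Suc k)) (Suc i) Pos a) (cn G (Suc (Suc k)) i Pos b)
     = dg G (Suc (Suc k)) i (dg G (Suc k) i c)"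
  proof -
    have "cn G (Suc (Suc k)) i Pos (cp G (Suc (Suc k)) (Suc i) a b) = cp G (Suc (Suc (Suc k))) (Suc (Suc i)) (cn G (Suc (Suc k)) i Pos a) (cn G (Suc (Suc k)) i Pos b)"
      by (rule conn_comp_lt) (use c i ab in \<open>simp_all add: a_def b_def\<close>)
    moreover have "cn G (Suc (Suc k)) i Pos a = cn G (Suc (Suc k)) (Suc i) Pos a"
      unfolding a_def using c i by simp
    moreover have "cp G (Suc (Suc k)) (Suc i) a b = dg G (Suc k) i c" unfolding a_def b_def using c i by simp
    ultimately show ?thesis using c i by simp
  qed
  show ?thesis
    using e1 e2 e3 c i unfolding a_def[symmetric] b_def[symmetric]
    by (simp add: a_def b_def)
qed

end

context cubical_omega_cat_conn
begin

declare psi_dg_suc[simp] psi_dg_eq[simp]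

lemma Kpos:
  assumes w: "w \<in> cell G (Suc (Suc k))" and i: "1 \<le> i" "i \<le> Suc k"
  shows "psi G (Suc (Suc (Suc k))) (Suc i) (psi G (Suc (Suc (Suc k))) i (cn G (Suc (Suc k)) (Suc i) Pos w))
       = cn G (Suc (Suc k)) i Neg (psi G (Suc (Suc k)) i w)"
proof -
  define c where "c = fc G (Suc (Suc k)) (Suc i) Neg w"
  define d where "d = fc G (Suc (Suc k)) (Suc i) Pos w"
  define a where "a = cn G (Suc k) i Pos c"
  define b where "b = cn G (Suc k) i Neg c"
  define u3 where "u3 = cn G (Suc k) i Neg d"
  define v where "v = cp G (Suc (Suc k)) (Suc i) w u3"
  define u where "u = psi G (Suc (Suc k)) i w"
  define X where "X = psi G (Suc (Suc (Suc k))) i (cn G (Suc (Suc k)) (Suc i) Pos w)"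
  define X2 where "X2 = cp G (Suc (Suc (Suc k))) (Suc i) (cn G (Suc (Suc k)) (Suc i) Pos w) (cn G (Suc (Suc k)) i Neg w)"
  note defs = c_def d_def a_def b_def u3_def v_def u_def X_def X2_def
  have cd: "c \<in> cell G (Suc k)" "d \<in> cell G (Suc k)" unfolding c_def d_def using w i by auto
  have cells: "a \<in> cell G (Suc (Suc k))" "b \<in> cell G (Suc (Suc k))" "u3 \<in> cell G (Suc (Suc k))"
    "v \<in> cell G (Suc (Suc k))" "u \<in> cell G (Suc (Suc k))"
    unfolding defs using w i by auto
  have uav: "u = cp G (Suc (Suc k)) (Suc i) a v" unfolding defs using w i by (simp add: psi_alt)
  have S1: "X = cp G (Suc (Suc (Suc k))) (Suc i) (dg G (Suc (Suc k)) (Suc (Suc i)) a) X2"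
    unfolding defs using w i by (simp add: psi_alt)
  have Xc: "X \<in> cell G (Suc (Suc (Suc k)))" "X2 \<in> cell G (Suc (Suc (Suc k)))" unfolding defs using w i by auto
  have S2: "psi G (Suc (Suc (Suc k))) (Suc i) X = cp G (Suc (Suc (Suc k))) (Suc (Suc i)) (dg G (Suc (Suc k)) i a)
       (cp G (Suc (Suc (Suc k))) (Suc (Suc i)) X (cn G (Suc (Suc k)) (Suc i) Neg u))"
  proof -
    have f1: "fc G (Suc (Suc (Suc k))) (Suc (Suc i)) Neg X = dg G (Suc k) i c"
      unfolding X_def c_def using w i by simp
    have f2: "fc G (Suc (Suc (Suc k))) (Suc (Suc i)) Pos X = u"
      unfolding X_def u_def using w i by simp
    have f3: "cn G (Suc (Suc k)) (Suc i) Pos (dg G (Suc k) i c) = dg G (Suc (Suc k)) i a"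
      unfolding a_def using cd i by simp
    show ?thesis using psi_alt[of X "Suc (Suc k)" "Suc i"] Xc i f1 f2 f3 cells w cd
      by (simp del: cp_assoc)
  qed

  have S3a: "cn G (Suc (Suc k)) (Suc i) Neg u = cp G (Suc (Suc (Suc k))) (Suc (Suc i)) (cp G (Suc (Suc (Suc k))) (Suc i) (cn G (Suc (Suc k)) (Suc i) Neg a) (dg G (Suc (Suc k)) (Suc (Suc i)) v)) (cp G (Suc (Suc (Suc k))) (Suc i) (dg G (Suc (Suc k)) (Suc i) v) (cn G (Suc (Suc k)) (Suc i) Neg v))"
    unfolding uav by (rule conn_comp_neg) (use cells w i in \<open>simp add: defs\<close>)
  have S3b: "cn G (Suc (Suc k)) (Suc i) Neg v = cp G (Suc (Suc (Suc k))) (Suc (Suc i)) (cp G (Suc (Suc (Suc k))) (Suc i) (cn G (Suc (Suc k)) (Suc i) Neg w) (dg G (Suc (Suc k)) (Suc (Suc i)) u3)) (cp G (Suc (Suc (Suc k))) (Suc i) (dg G (Suc (Suc k)) (Suc i) u3) (cn G (Suc (Suc k)) (Suc i) Neg u3))"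
    unfolding v_def by (rule conn_comp_neg) (use cells w i in \<open>simp add: defs\<close>)
  have I1: "cp G (Suc (Suc (Suc k))) (Suc (Suc i)) (X2) (cp G (Suc (Suc (Suc k))) (Suc i) (cn G (Suc (Suc k)) (Suc i) Neg w) (dg G (Suc (Suc k)) (Suc (Suc i)) u3)) = cp G (Suc (Suc (Suc k))) (Suc i) (cp G (Suc (Suc (Suc k))) (Suc (Suc i)) (cn G (Suc (Suc k)) (Suc i) Pos w) (cn G (Suc (Suc k)) (Suc i) Neg w)) (cp G (Suc (Suc (Suc k))) (Suc (Suc i)) (cn G (Suc (Suc k)) i Neg w) (dg G (Suc (Suc k)) (Suc (Suc i)) u3))"
    unfolding X2_def by (rule interchange) (use cells w i cd in \<open>simp_all add: defs\<close>)
  have I2: "cp G (Suc (Suc (Suc k))) (Suc (Suc i)) (cp G (Suc (Suc (Suc k))) (Suc i) (dg G (Suc (Suc k)) (Suc i) w) (cn G (Suc (Suc k)) i Neg w)) (cp G (Suc (Suc (Suc k))) (Suc i) (dg G (Suc (Suc k)) (Suc i) u3) (cn G (Suc (Suc k)) (Suc i) Neg u3)) = cp G (Suc (Suc (Suc k))) (Suc i) (cp G (Suc (Suc (Suc k))) (Suc (Suc i)) (dg G (Suc (Suc k)) (Suc i) w) (dg G (Suc (Suc k)) (Suc i) u3)) (cp G (Suc (Suc (Suc k))) (Suc (Suc i)) (cn G (Suc (Suc k)) i Neg w) (cn G (Suc (Suc k)) (Suc i) Neg u3))"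
    by (rule interchange) (use cells w i cd in \<open>simp_all add: defs\<close>)
  have S3c: "cp G (Suc (Suc (Suc k))) (Suc (Suc i)) (X2) (cn G (Suc (Suc k)) (Suc i) Neg v) = cn G (Suc (Suc k)) i Neg v"
  proof -
    have cw: "cn G (Suc (Suc k)) (Suc i) Neg w \<in> cell G (Suc (Suc (Suc k)))" "cn G (Suc (Suc k)) (Suc i) Pos w \<in> cell G (Suc (Suc (Suc k)))" "cn G (Suc (Suc k)) i Neg w \<in> cell G (Suc (Suc (Suc k)))"
      using w i by auto
    have r2: "cp G (Suc (Suc (Suc k))) (Suc i) (cn G (Suc (Suc k)) (Suc i) Neg w) (dg G (Suc (Suc k)) (Suc (Suc i)) u3) \<in> cell G (Suc (Suc (Suc k)))" "cp G (Suc (Suc (Suc k))) (Suc i) (dg G (Suc (Suc k)) (Suc i) u3) (cn G (Suc (Suc k)) (Suc i) Neg u3) \<in> cell G (Suc (Suc (Suc k)))" using w i cd by (auto simp: u3_def d_def)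
    have A: "cp G (Suc (Suc (Suc k))) (Suc (Suc i)) (X2) (cn G (Suc (Suc k)) (Suc i) Neg v) = cp G (Suc (Suc (Suc k))) (Suc (Suc i)) (cp G (Suc (Suc (Suc k))) (Suc (Suc i)) (X2) (cp G (Suc (Suc (Suc k))) (Suc i) (cn G (Suc (Suc k)) (Suc i) Neg w) (dg G (Suc (Suc k)) (Suc (Suc i)) u3))) (cp G (Suc (Suc (Suc k))) (Suc i) (dg G (Suc (Suc k)) (Suc i) u3) (cn G (Suc (Suc k)) (Suc i) Neg u3))"
      unfolding S3b
      by (rule comp_assoc[symmetric]) (use w i cd Xc r2 in \<open>simp_all add: X2_def u3_def d_def del: cp_assoc\<close>)
    have B: "cp G (Suc (Suc (Suc k))) (Suc (Suc i)) (cn G (Suc (Suc k)) (Suc i) Pos w) (cn G (Suc (Suc k)) (Suc i) Neg w) = dg G (Suc (Suc k)) (Suc i) w" using w i by simp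
    have C: "cp G (Suc (Suc (Suc k))) (Suc (Suc i)) (cn G (Suc (Suc k)) i Neg w) (dg G (Suc (Suc k)) (Suc (Suc i)) u3) = cn G (Suc (Suc k)) i Neg w"
      using w i cd by (simp add: u3_def d_def)
    have D: "cp G (Suc (Suc (Suc k))) (Suc (Suc i)) (dg G (Suc (Suc k)) (Suc i) w) (dg G (Suc (Suc k)) (Suc i) u3) = dg G (Suc (Suc k)) (Suc i) v"
      unfolding v_def by (rule deg_comp_le[symmetric]) (use w i cd in \<open>simp_all add: u3_def d_def\<close>)
    have E0: "cn G (Suc (Suc k)) (Suc i) Neg u3 = cn G (Suc (Suc k)) i Neg u3" using cd i by (simp add: u3_def)
    have E: "cp G (Suc (Suc (Suc k))) (Suc (Suc i)) (cn G (Suc (Suc k)) i Neg w) (cn G (Suc (Suc k)) (Suc i) Neg u3) = cn G (Suc (Suc k)) i Neg v"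
      unfolding E0 v_def by (rule conn_comp_lt[symmetric]) (use w i cd in \<open>simp_all add: u3_def d_def\<close>)
    have F: "cp G (Suc (Suc (Suc k))) (Suc i) (dg G (Suc (Suc k)) (Suc i) v) (cn G (Suc (Suc k)) i Neg v) = cn G (Suc (Suc k)) i Neg v"
      using cells i by simp
    show ?thesis unfolding A I1 B C I2 D E F ..
  qed
  have I3: "cp G (Suc (Suc (Suc k))) (Suc (Suc i)) (cp G (Suc (Suc (Suc k))) (Suc i) (dg G (Suc (Suc k)) (Suc (Suc i)) a) (X2)) (cp G (Suc (Suc (Suc k))) (Suc i) (cn G (Suc (Suc k)) (Suc i) Neg a) (dg G (Suc (Suc k)) (Suc (Suc i)) v)) = cp G (Suc (Suc (Suc k))) (Suc i) (cp G (Suc (Suc (Suc k))) (Suc (Suc i)) (dg G (Suc (Suc k)) (Suc (Suc i)) a) (cn G (Suc (Suc k)) (Suc i) Neg a)) (cp G (Suc (Suc (Suc k))) (Suc (Suc i)) (X2) (dg G (Suc (Suc k)) (Suc (Suc i)) v))"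
    by (rule interchange) (use cells w i cd in \<open>simp_all add: a_def c_def X2_def v_def u3_def d_def\<close>)
  have I4: "cp G (Suc (Suc (Suc k))) (Suc (Suc i)) (cp G (Suc (Suc (Suc k))) (Suc i) (cn G (Suc (Suc k)) (Suc i) Neg a) (X2)) (cp G (Suc (Suc (Suc k))) (Suc i) (dg G (Suc (Suc k)) (Suc i) v) (cn G (Suc (Suc k)) (Suc i) Neg v)) = cp G (Suc (Suc (Suc k))) (Suc i) (cp G (Suc (Suc (Suc k))) (Suc (Suc i)) (cn G (Suc (Suc k)) (Suc i) Neg a) (dg G (Suc (Suc k)) (Suc i) v)) (cp G (Suc (Suc (Suc k))) (Suc (Suc i)) (X2) (cn G (Suc (Suc k)) (Suc i) Neg v))"
    by (rule interchange) (use cells w i cd in \<open>simp_all add: a_def c_def X2_def v_def u3_def d_def\<close>)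
  have S3: "cp G (Suc (Suc (Suc k))) (Suc (Suc i)) (X) (cn G (Suc (Suc k)) (Suc i) Neg u) = cp G (Suc (Suc (Suc k))) (Suc i) (cp G (Suc (Suc (Suc k))) (Suc (Suc i)) (cn G (Suc (Suc k)) (Suc i) Neg a) (dg G (Suc (Suc k)) (Suc i) v)) (cn G (Suc (Suc k)) i Neg v)"
  proof -
    have r: "cp G (Suc (Suc (Suc k))) (Suc i) (cn G (Suc (Suc k)) (Suc i) Neg a) (dg G (Suc (Suc k)) (Suc (Suc i)) v) \<in> cell G (Suc (Suc (Suc k)))" "cp G (Suc (Suc (Suc k))) (Suc i) (dg G (Suc (Suc k)) (Suc i) v) (cn G (Suc (Suc k)) (Suc i) Neg v) \<in> cell G (Suc (Suc (Suc k)))" using cells w i cd by (simp_all del: cp_lid cp_rid add: a_def c_def v_def u3_def d_def)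
    have A: "cp G (Suc (Suc (Suc k))) (Suc (Suc i)) (X) (cn G (Suc (Suc k)) (Suc i) Neg u) = cp G (Suc (Suc (Suc k))) (Suc (Suc i)) (cp G (Suc (Suc (Suc k))) (Suc (Suc i)) (X) (cp G (Suc (Suc (Suc k))) (Suc i) (cn G (Suc (Suc k)) (Suc i) Neg a) (dg G (Suc (Suc k)) (Suc (Suc i)) v))) (cp G (Suc (Suc (Suc k))) (Suc i) (dg G (Suc (Suc k)) (Suc i) v) (cn G (Suc (Suc k)) (Suc i) Neg v))"
      unfolding S3a
      by (rule comp_assoc[symmetric]) (use w i cd Xc r in \<open>simp_all del: cp_lid cp_rid add: S1 X2_def a_def c_def v_def u3_def d_def del: cp_assoc\<close>)
    have C1: "cp G (Suc (Suc (Suc k))) (Suc (Suc i)) (dg G (Suc (Suc k)) (Suc (Suc i)) a) (cn G (Suc (Suc k)) (Suc i) Neg a) = cn G (Suc (Suc k)) (Suc i) Neg a" using cells i by simp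
    have C2: "cp G (Suc (Suc (Suc k))) (Suc (Suc i)) (X2) (dg G (Suc (Suc k)) (Suc (Suc i)) v) = X2" using w i cd by (simp add: X2_def v_def u3_def d_def)
    show ?thesis unfolding A unfolding S1 unfolding I3 unfolding C1 C2 unfolding I4 unfolding S3c ..
  qed
  have S4a: "dg G (Suc (Suc k)) i a = cp G (Suc (Suc (Suc k))) (Suc (Suc i)) (cp G (Suc (Suc (Suc k))) (Suc i) (cn G (Suc (Suc k)) (Suc i) Pos a) (dg G (Suc (Suc k)) (Suc i) a)) (cp G (Suc (Suc (Suc k))) (Suc i) (dg G (Suc (Suc k)) (Suc (Suc i)) a) (cn G (Suc (Suc k)) (Suc i) Pos b))"
  proof -
    have "dg G (Suc (Suc k)) i a = cn G (Suc (Suc k)) (Suc i) Pos (dg G (Suc k) i c)" using cd i by (simp add: a_def)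
    also have "... = cn G (Suc (Suc k)) (Suc i) Pos (cp G (Suc (Suc k)) (Suc i) (a) (b))" using cd i by (simp add: a_def b_def)
    also have "... = cp G (Suc (Suc (Suc k))) (Suc (Suc i)) (cp G (Suc (Suc (Suc k))) (Suc i) (cn G (Suc (Suc k)) (Suc i) Pos a) (dg G (Suc (Suc k)) (Suc i) a)) (cp G (Suc (Suc (Suc k))) (Suc i) (dg G (Suc (Suc k)) (Suc (Suc i)) a) (cn G (Suc (Suc k)) (Suc i) Pos b))" by (rule conn_comp_pos) (use cd i in \<open>simp del: cp_lid cp_rid add: a_def b_def\<close>)
    finally show ?thesis .
  qed
  have I5: "cp G (Suc (Suc (Suc k))) (Suc (Suc i)) (cp G (Suc (Suc (Suc k))) (Suc i) (cn G (Suc (Suc k)) (Suc i) Pos a) (dg G (Suc (Suc k)) (Suc i) a)) (cp G (Suc (Suc (Suc k))) (Suc i) (dg G (Suc (Suc k)) (Suc (Suc i)) a) (cn G (Suc (Suc k)) (Suc i) Pos b)) = cp G (Suc (Suc (Suc k))) (Suc i) (cp G (Suc (Suc (Suc k))) (Suc (Suc i)) (cn G (Suc (Suc k)) (Suc i) Pos a) (dg G (Suc (Suc k)) (Suc (Suc i)) a)) (cp G (Suc (Suc (Suc k))) (Suc (Suc i)) (dg G (Suc (Suc k)) (Suc i) a) (cn G (Suc (Suc k)) (Suc i) Pos b))"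
    by (rule interchange) (use cells cd i in \<open>simp_all del: cp_lid cp_rid add: a_def b_def\<close>)
  have T1: "cp G (Suc (Suc (Suc k))) (Suc (Suc i)) (dg G (Suc (Suc k)) (Suc i) a) (cn G (Suc (Suc k)) (Suc i) Pos b) = cn G (Suc (Suc k)) i Neg a"
    unfolding a_def b_def using Tlem[OF cd(1) i] by simp
  have R5: "cp G (Suc (Suc (Suc k))) (Suc (Suc i)) (cn G (Suc (Suc k)) (Suc i) Pos a) (dg G (Suc (Suc k)) (Suc (Suc i)) a) = cn G (Suc (Suc k)) (Suc i) Pos a" using cells i by simp
  have idv: "cp G (Suc (Suc k)) (Suc i) (dg G (Suc k) (Suc i) (fc G (Suc (Suc k)) (Suc i) Neg w)) (cp G (Suc (Suc k)) (Suc i) w (cn G (Suc k) i Neg (fc G (Suc (Suc k)) (Suc i) Pos w))) = cp G (Suc (Suc k)) (Suc i) w (cn G (Suc k) i Neg (fc G (Suc (Suc k)) (Suc i) Pos w))"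
    using w i by simp
  have I6: "cp G (Suc (Suc (Suc k))) (Suc (Suc i)) (cp G (Suc (Suc (Suc k))) (Suc i) (cn G (Suc (Suc k)) (Suc i) Pos a) (cn G (Suc (Suc k)) i Neg a)) (cp G (Suc (Suc (Suc k))) (Suc i) (cp G (Suc (Suc (Suc k))) (Suc (Suc i)) (cn G (Suc (Suc k)) (Suc i) Neg a) (dg G (Suc (Suc k)) (Suc i) v)) (cn G (Suc (Suc k)) i Neg v)) = cp G (Suc (Suc (Suc k))) (Suc i) (cp G (Suc (Suc (Suc k))) (Suc (Suc i)) (cn G (Suc (Suc k)) (Suc i) Pos a) (cp G (Suc (Suc (Suc k))) (Suc (Suc i)) (cn G (Suc (Suc k)) (Suc i) Neg a) (dg G (Suc (Suc k)) (Suc i) v))) (cp G (Suc (Suc (Suc k))) (Suc (Suc i)) (cn G (Suc (Suc k)) i Neg a) (cn G (Suc (Suc k)) i Neg v))"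
    by (rule interchange) (use cells cd w i in \<open>simp_all del: cp_lid cp_rid add: idv a_def c_def v_def u3_def d_def\<close>)
  have F1: "cp G (Suc (Suc (Suc k))) (Suc (Suc i)) (cn G (Suc (Suc k)) (Suc i) Pos a) (cp G (Suc (Suc (Suc k))) (Suc (Suc i)) (cn G (Suc (Suc k)) (Suc i) Neg a) (dg G (Suc (Suc k)) (Suc i) v)) = dg G (Suc (Suc k)) (Suc i) u"
  proof -
    have "cp G (Suc (Suc (Suc k))) (Suc (Suc i)) (cn G (Suc (Suc k)) (Suc i) Pos a) (cp G (Suc (Suc (Suc k))) (Suc (Suc i)) (cn G (Suc (Suc k)) (Suc i) Neg a) (dg G (Suc (Suc k)) (Suc i) v)) = cp G (Suc (Suc (Suc k))) (Suc (Suc i)) (cp G (Suc (Suc (Suc k))) (Suc (Suc i)) (cn G (Suc (Suc k)) (Suc i) Pos a) (cn G (Suc (Suc k)) (Suc i) Neg a)) (dg G (Suc (Suc k)) (Suc i) v)"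
      by (rule comp_assoc[symmetric]) (use cells cd w i in \<open>simp_all del: cp_lid cp_rid add: a_def c_def v_def u3_def d_def del: cp_assoc\<close>)
    also have "... = cp G (Suc (Suc (Suc k))) (Suc (Suc i)) (dg G (Suc (Suc k)) (Suc i) a) (dg G (Suc (Suc k)) (Suc i) v)" using cells i by simp
    also have "... = dg G (Suc (Suc k)) (Suc i) u" unfolding uav
      by (rule deg_comp_le[symmetric]) (use cells cd w i in \<open>simp_all del: cp_lid cp_rid add: a_def c_def v_def u3_def d_def\<close>)
    finally show ?thesis .
  qed
  have F2: "cp G (Suc (Suc (Suc k))) (Suc (Suc i)) (cn G (Suc (Suc k)) i Neg a) (cn G (Suc (Suc k)) i Neg v) = cn G (Suc (Suc k)) i Neg u" unfolding uav
    by (rule conn_comp_lt[symmetric]) (use cells cd w i in \<open>simp_all del: cp_lid cp_rid add: a_def c_def v_def u3_def d_def\<close>)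
  have F3: "cp G (Suc (Suc (Suc k))) (Suc i) (dg G (Suc (Suc k)) (Suc i) u) (cn G (Suc (Suc k)) i Neg u) = cn G (Suc (Suc k)) i Neg u" using cells i by simp
  have S4: "cp G (Suc (Suc (Suc k))) (Suc (Suc i)) (dg G (Suc (Suc k)) i a) (cp G (Suc (Suc (Suc k))) (Suc i) (cp G (Suc (Suc (Suc k))) (Suc (Suc i)) (cn G (Suc (Suc k)) (Suc i) Neg a) (dg G (Suc (Suc k)) (Suc i) v)) (cn G (Suc (Suc k)) i Neg v)) = cn G (Suc (Suc k)) i Neg u"
  proof -
    have "cp G (Suc (Suc (Suc k))) (Suc (Suc i)) (dg G (Suc (Suc k)) i a) (cp G (Suc (Suc (Suc k))) (Suc i) (cp G (Suc (Suc (Suc k))) (Suc (Suc i)) (cn G (Suc (Suc k)) (Suc i) Neg a) (dg G (Suc (Suc k)) (Suc i) v)) (cn G (Suc (Suc k)) i Neg v)) = cp G (Suc (Suc (Suc k))) (Suc (Suc i)) (cp G (Suc (Suc (Suc k))) (Suc (Suc i)) (cp G (Suc (Suc (Suc k))) (Suc i) (cn G (Suc (Suc k)) (Suc i) Pos a) (dg G (Suc (Suc k)) (Suc i) a)) (cp G (Suc (Suc (Suc k))) (Suc i) (dg G (Suc (Suc k)) (Suc (Suc i)) a) (cn G (Suc (Suc k)) (Suc i) Pos b))) (cp G (Suc (Suc (Suc k))) (Suc i) (cp G (Suc (Suc (Suc k))) (Suc (Suc i)) (cn G (Suc (Suc k)) (Suc i) Neg a) (dg G (Suc (Suc k)) (Suc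 i) v)) (cn G (Suc (Suc k)) i Neg v))" unfolding S4a ..
    also have "... = cn G (Suc (Suc k)) i Neg u"
      unfolding I5 unfolding T1 R5 unfolding I6 unfolding F1 F2 unfolding F3 ..
    finally show ?thesis .
  qed
  have "psi G (Suc (Suc (Suc k))) (Suc i) X = cn G (Suc (Suc k)) i Neg u" unfolding S2 S3 S4 ..
  then show ?thesis unfolding X_def u_def .
qed

end

context cubical_omega_cat_conn
begin

lemma Kneg:
  assumes w: "w \<in> cell G (Suc (Suc k))" and i: "1 \<le> i" "i \<le> Suc k"
  shows "psi G (Suc (Suc (Suc k))) (Suc i) (psi G (Suc (Suc (Suc k))) i (cn G (Suc (Suc k)) (Suc i) Neg w))
       = cn G (Suc (Suc k)) i Pos (psi G (Suc (Suc k)) i w)"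
proof -
  define c where "c = fc G (Suc (Suc k)) (Suc i) Neg w"
  define d where "d = fc G (Suc (Suc k)) (Suc i) Pos w"
  define a where "a = cn G (Suc k) i Pos c"
  define a' where "a' = cn G (Suc k) i Pos d"
  define u3 where "u3 = cn G (Suc k) i Neg d"
  define v where "v = cp G (Suc (Suc k)) (Suc i) a w"
  define u where "u = psi G (Suc (Suc k)) i w"
  define X where "X = psi G (Suc (Suc (Suc k))) i (cn G (Suc (Suc k)) (Suc i) Neg w)"
  define X1 where "X1 = cp G (Suc (Suc (Suc k))) (Suc i) (cn G (Suc (Suc k)) i Pos w) (cn G (Suc (Suc k)) (Suc i) Neg w)"
  note defs = c_def d_def a_def a'_def u3_def v_def u_def X_def X1_def
  have cd: "c \<in> cell G (Suc k)" "d \<in> cell G (Suc k)" unfolding c_def d_def using w i by auto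
  have cells: "a \<in> cell G (Suc (Suc k))" "a' \<in> cell G (Suc (Suc k))" "u3 \<in> cell G (Suc (Suc k))"
    "v \<in> cell G (Suc (Suc k))" "u \<in> cell G (Suc (Suc k))"
    unfolding defs using w i by auto
  have uvu: "u = cp G (Suc (Suc k)) (Suc i) v u3" unfolding defs using w i by (simp add: psi_alt)
  have S1: "X = cp G (Suc (Suc (Suc k))) (Suc i) (X1) (dg G (Suc (Suc k)) (Suc (Suc i)) u3)"
    unfolding defs using w i by (simp add: psi_alt)
  have Xc: "X \<in> cell G (Suc (Suc (Suc k)))" "X1 \<in> cell G (Suc (Suc (Suc k)))" unfolding defs using w i by auto
  have f1: "fc G (Suc (Suc (Suc k))) (Suc (Suc i)) Neg X = u"
      unfolding X_def u_def using w i by simp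
  have f2: "fc G (Suc (Suc (Suc k))) (Suc (Suc i)) Pos X = dg G (Suc k) i d"
      unfolding X_def d_def using w i by simp
  have S2: "psi G (Suc (Suc (Suc k))) (Suc i) X = cp G (Suc (Suc (Suc k))) (Suc (Suc i)) (cn G (Suc (Suc k)) (Suc i) Pos u) (cp G (Suc (Suc (Suc k))) (Suc (Suc i)) (X) (dg G (Suc (Suc k)) i u3))"
  proof -
    have f3: "cn G (Suc (Suc k)) (Suc i) Neg (dg G (Suc k) i d) = dg G (Suc (Suc k)) i u3"
      unfolding u3_def using cd i by simp
    show ?thesis using psi_alt[of X "Suc (Suc k)" "Suc i"] Xc i f1 f2 f3 cells w cd
      by (simp del: cp_assoc)
  qed
  have P1: "cn G (Suc (Suc k)) (Suc i) Pos u = cp G (Suc (Suc (Suc k))) (Suc (Suc i)) (cp G (Suc (Suc (Suc k))) (Suc i) (cn G (Suc (Suc k)) (Suc i) Pos v) (dg G (Suc (Suc k)) (Suc i) v)) (cp G (Suc (Suc (Suc k))) (Suc i) (dg G (Suc (Suc k)) (Suc (Suc i)) v) (cn G (Suc (Suc k)) (Suc i) Pos u3))"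
    unfolding uvu by (rule conn_comp_pos) (use cells w i in \<open>simp del: cp_lid cp_rid add: defs\<close>)
  have P2: "cn G (Suc (Suc k)) (Suc i) Pos v = cp G (Suc (Suc (Suc k))) (Suc (Suc i)) (cp G (Suc (Suc (Suc k))) (Suc i) (cn G (Suc (Suc k)) (Suc i) Pos a) (dg G (Suc (Suc k)) (Suc i) a)) (cp G (Suc (Suc (Suc k))) (Suc i) (dg G (Suc (Suc k)) (Suc (Suc i)) a) (cn G (Suc (Suc k)) (Suc i) Pos w))"
    unfolding v_def by (rule conn_comp_pos) (use cells w i in \<open>simp del: cp_lid cp_rid add: defs\<close>)
  have IA: "cp G (Suc (Suc (Suc k))) (Suc (Suc i)) (cp G (Suc (Suc (Suc k))) (Suc i) (dg G (Suc (Suc k)) (Suc (Suc i)) v) (cn G (Suc (Suc k)) (Suc i) Pos u3)) (cp G (Suc (Suc (Suc k))) (Suc i) (X1) (dg G (Suc (Suc k)) (Suc (Suc i)) u3)) = cp G (Suc (Suc (Suc k))) (Suc i) (cp G (Suc (Suc (Suc k))) (Suc (Suc i)) (dg G (Suc (Suc k)) (Suc (Suc i)) v) (X1)) (cp G (Suc (Suc (Suc k))) (Suc (Suc i)) (cn G (Suc (Suc k)) (Suc i) Pos u3) (dg G (Suc (Suc k)) (Suc (Suc i)) u3))"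
    by (rule interchange) (use cells w i cd in \<open>simp_all del: cp_lid cp_rid add: a_def c_def X1_def v_def u3_def d_def\<close>)
  have A1: "cp G (Suc (Suc (Suc k))) (Suc (Suc i)) (cp G (Suc (Suc (Suc k))) (Suc i) (dg G (Suc (Suc k)) (Suc (Suc i)) v) (cn G (Suc (Suc k)) (Suc i) Pos u3)) (X) = cp G (Suc (Suc (Suc k))) (Suc i) (X1) (cn G (Suc (Suc k)) (Suc i) Pos u3)"
  proof -
    have l1: "cp G (Suc (Suc (Suc k))) (Suc (Suc i)) (dg G (Suc (Suc k)) (Suc (Suc i)) v) (X1) = X1" using w i cd by (simp add: X1_def v_def a_def c_def)
    have l2: "cp G (Suc (Suc (Suc k))) (Suc (Suc i)) (cn G (Suc (Suc k)) (Suc i) Pos u3) (dg G (Suc (Suc k)) (Suc (Suc i)) u3) = cn G (Suc (Suc k)) (Suc i) Pos u3" using cells i by simp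
    show ?thesis unfolding S1 IA l1 l2 ..
  qed
  have IB: "cp G (Suc (Suc (Suc k))) (Suc (Suc i)) (cp G (Suc (Suc (Suc k))) (Suc i) (dg G (Suc (Suc k)) (Suc (Suc i)) a) (cn G (Suc (Suc k)) (Suc i) Pos w)) (X1) = cp G (Suc (Suc (Suc k))) (Suc i) (cp G (Suc (Suc (Suc k))) (Suc (Suc i)) (dg G (Suc (Suc k)) (Suc (Suc i)) a) (cn G (Suc (Suc k)) i Pos w)) (cp G (Suc (Suc (Suc k))) (Suc (Suc i)) (cn G (Suc (Suc k)) (Suc i) Pos w) (cn G (Suc (Suc k)) (Suc i) Neg w))"
    unfolding X1_def by (rule interchange) (use cells w i cd in \<open>simp_all del: cp_lid cp_rid add: a_def c_def\<close>)
  have IC: "cp G (Suc (Suc (Suc k))) (Suc (Suc i)) (cp G (Suc (Suc (Suc k))) (Suc i) (cn G (Suc (Suc k)) (Suc i) Pos a) (dg G (Suc (Suc k)) (Suc i) a)) (cp G (Suc (Suc (Suc k))) (Suc i) (cn G (Suc (Suc k)) i Pos w) (dg G (Suc (Suc k)) (Suc i) w)) = cp G (Suc (Suc (Suc k))) (Suc i) (cp G (Suc (Suc (Suc k))) (Suc (Suc i)) (cn G (Suc (Suc k)) (Suc i) Pos a) (cn G (Suc (Suc k)) i Pos w)) (cp G (Suc (Suc (Suc k))) (Suc (Suc i)) (dg G (Suc (Suc k)) (Suc i) a) (dg G (Suc (Suc k)) (Suc i) w))"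
    by (rule interchange) (use cells w i cd in \<open>simp_all del: cp_lid cp_rid add: a_def c_def\<close>)
  have A2: "cp G (Suc (Suc (Suc k))) (Suc (Suc i)) (cn G (Suc (Suc k)) (Suc i) Pos v) (X1) = cn G (Suc (Suc k)) i Pos v"
  proof -
    have r: "cp G (Suc (Suc (Suc k))) (Suc i) (cn G (Suc (Suc k)) (Suc i) Pos a) (dg G (Suc (Suc k)) (Suc i) a) \<in> cell G (Suc (Suc (Suc k)))" "cp G (Suc (Suc (Suc k))) (Suc i) (dg G (Suc (Suc k)) (Suc (Suc i)) a) (cn G (Suc (Suc k)) (Suc i) Pos w) \<in> cell G (Suc (Suc (Suc k)))"
      using cells w i cd by (simp_all del: cp_lid cp_rid add: a_def c_def)
    have l0: "cp G (Suc (Suc (Suc k))) (Suc (Suc i)) (cn G (Suc (Suc k)) (Suc i) Pos v) (X1) = cp G (Suc (Suc (Suc k))) (Suc (Suc i)) (cp G (Suc (Suc (Suc k))) (Suc i) (cn G (Suc (Suc k)) (Suc i) Pos a) (dg G (Suc (Suc k)) (Suc i) a)) (cp G (Suc (Suc (Suc k))) (Suc (Suc i)) (cp G (Suc (Suc (Suc k))) (Suc i) (dg G (Suc (Suc k)) (Suc (Suc i)) a) (cn G (Suc (Suc k)) (Suc i) Pos w)) (X1))"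
      unfolding P2 by (rule comp_assoc) (use w i cd Xc r in \<open>simp_all del: cp_lid cp_rid cp_assoc add: X1_def a_def c_def\<close>)
    have l1: "cp G (Suc (Suc (Suc k))) (Suc (Suc i)) (dg G (Suc (Suc k)) (Suc (Suc i)) a) (cn G (Suc (Suc k)) i Pos w) = cn G (Suc (Suc k)) i Pos w" using w i by (simp add: a_def c_def)
    have l2: "cp G (Suc (Suc (Suc k))) (Suc (Suc i)) (cn G (Suc (Suc k)) (Suc i) Pos w) (cn G (Suc (Suc k)) (Suc i) Neg w) = dg G (Suc (Suc k)) (Suc i) w" using w i by simp
    have l3: "cp G (Suc (Suc (Suc k))) (Suc (Suc i)) (cn G (Suc (Suc k)) (Suc i) Pos a) (cn G (Suc (Suc k)) i Pos w) = cn G (Suc (Suc k)) i Pos v"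
    proof -
      have "cn G (Suc (Suc k)) (Suc i) Pos a = cn G (Suc (Suc k)) i Pos a" using cd i by (simp add: a_def)
      moreover have "cp G (Suc (Suc (Suc k))) (Suc (Suc i)) (cn G (Suc (Suc k)) i Pos a) (cn G (Suc (Suc k)) i Pos w) = cn G (Suc (Suc k)) i Pos v" unfolding v_def
        by (rule conn_comp_lt[symmetric]) (use cells cd w i in \<open>simp_all del: cp_lid cp_rid add: a_def c_def\<close>)
      ultimately show ?thesis by simp
    qed
    have l4: "cp G (Suc (Suc (Suc k))) (Suc (Suc i)) (dg G (Suc (Suc k)) (Suc i) a) (dg G (Suc (Suc k)) (Suc i) w) = dg G (Suc (Suc k)) (Suc i) v" unfolding v_def
      by (rule deg_comp_le[symmetric]) (use cells cd w i in \<open>simp_all del: cp_lid cp_rid add: a_def c_def\<close>)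
    have l5: "cp G (Suc (Suc (Suc k))) (Suc i) (cn G (Suc (Suc k)) i Pos v) (dg G (Suc (Suc k)) (Suc i) v) = cn G (Suc (Suc k)) i Pos v" using cells i by simp
    show ?thesis unfolding l0 unfolding IB unfolding l1 l2 unfolding IC unfolding l3 l4 unfolding l5 ..
  qed
  have Q2c: "cp G (Suc (Suc (Suc k))) (Suc (Suc i)) (dg G (Suc (Suc k)) (Suc i) v) (cn G (Suc (Suc k)) (Suc i) Pos u3) \<in> cell G (Suc (Suc (Suc k)))" using cells w i cd by (simp del: cp_lid cp_rid add: v_def a_def c_def u3_def d_def)
  have ID: "cp G (Suc (Suc (Suc k))) (Suc (Suc i)) (cp G (Suc (Suc (Suc k))) (Suc i) (cn G (Suc (Suc k)) (Suc i) Pos v) (dg G (Suc (Suc k)) (Suc i) v)) (cp G (Suc (Suc (Suc k))) (Suc i) (X1) (cn G (Suc (Suc k)) (Suc i) Pos u3)) = cp G (Suc (Suc (Suc k))) (Suc i) (cp G (Suc (Suc (Suc k))) (Suc (Suc i)) (cn G (Suc (Suc k)) (Suc i) Pos v) (X1)) (cp G (Suc (Suc (Suc k))) (Suc (Suc i)) (dg G (Suc (Suc k)) (Suc i) v) (cn G (Suc (Suc k)) (Suc i) Pos u3))"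
    by (rule interchange) (use cells w i cd in \<open>simp_all del: cp_lid cp_rid add: a_def c_def X1_def v_def u3_def d_def\<close>)
  have A: "cp G (Suc (Suc (Suc k))) (Suc (Suc i)) (cn G (Suc (Suc k)) (Suc i) Pos u) (X) = cp G (Suc (Suc (Suc k))) (Suc i) (cn G (Suc (Suc k)) i Pos v) (cp G (Suc (Suc (Suc k))) (Suc (Suc i)) (dg G (Suc (Suc k)) (Suc i) v) (cn G (Suc (Suc k)) (Suc i) Pos u3))"
  proof -
    have r: "cp G (Suc (Suc (Suc k))) (Suc i) (cn G (Suc (Suc k)) (Suc i) Pos v) (dg G (Suc (Suc k)) (Suc i) v) \<in> cell G (Suc (Suc (Suc k)))" "cp G (Suc (Suc (Suc k))) (Suc i) (dg G (Suc (Suc k)) (Suc (Suc i)) v) (cn G (Suc (Suc k)) (Suc i) Pos u3) \<in> cell G (Suc (Suc (Suc k)))"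
      using cells w i cd by (simp_all del: cp_lid cp_rid add: v_def a_def c_def u3_def d_def)
    have l0: "cp G (Suc (Suc (Suc k))) (Suc (Suc i)) (cn G (Suc (Suc k)) (Suc i) Pos u) (X) = cp G (Suc (Suc (Suc k))) (Suc (Suc i)) (cp G (Suc (Suc (Suc k))) (Suc i) (cn G (Suc (Suc k)) (Suc i) Pos v) (dg G (Suc (Suc k)) (Suc i) v)) (cp G (Suc (Suc (Suc k))) (Suc (Suc i)) (cp G (Suc (Suc (Suc k))) (Suc i) (dg G (Suc (Suc k)) (Suc (Suc i)) v) (cn G (Suc (Suc k)) (Suc i) Pos u3)) (X))"
      unfolding P1 by (rule comp_assoc) (use w i cd Xc r in \<open>simp_all del: cp_lid cp_rid cp_assoc add: S1 X1_def v_def a_def c_def u3_def d_def\<close>)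
    show ?thesis unfolding l0 unfolding A1 unfolding ID unfolding A2 ..
  qed
  have R45: "dg G (Suc (Suc k)) i u3 = cp G (Suc (Suc (Suc k))) (Suc (Suc i)) (cp G (Suc (Suc (Suc k))) (Suc i) (cn G (Suc (Suc k)) (Suc i) Neg a') (dg G (Suc (Suc k)) (Suc (Suc i)) u3)) (cp G (Suc (Suc (Suc k))) (Suc i) (dg G (Suc (Suc k)) (Suc i) u3) (cn G (Suc (Suc k)) (Suc i) Neg u3))"
  proof -
    have "dg G (Suc (Suc k)) i u3 = cn G (Suc (Suc k)) (Suc i) Neg (dg G (Suc k) i d)" using cd i by (simp add: u3_def)
    also have "... = cn G (Suc (Suc k)) (Suc i) Neg (cp G (Suc (Suc k)) (Suc i) a' u3)" using cd i by (simp add: a'_def u3_def)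
    also have "... = cp G (Suc (Suc (Suc k))) (Suc (Suc i)) (cp G (Suc (Suc (Suc k))) (Suc i) (cn G (Suc (Suc k)) (Suc i) Neg a') (dg G (Suc (Suc k)) (Suc (Suc i)) u3)) (cp G (Suc (Suc (Suc k))) (Suc i) (dg G (Suc (Suc k)) (Suc i) u3) (cn G (Suc (Suc k)) (Suc i) Neg u3))"
      by (rule conn_comp_neg) (use cd i in \<open>simp add: a'_def u3_def\<close>)
    finally show ?thesis .
  qed
  have idw: "cp G (Suc (Suc k)) (Suc i) w (dg G (Suc k) (Suc i) (fc G (Suc (Suc k)) (Suc i) Pos w)) = w"
    using w i by simp
  have fv: "fc G (Suc (Suc k)) (Suc i) Pos v = d" unfolding v_def a_def c_def d_def using w i by simp
  have fu3: "fc G (Suc (Suc k)) (Suc i) Neg u3 = d" unfolding u3_def using cd i by simp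
  have fa': "fc G (Suc (Suc k)) (Suc i) Pos a' = d" unfolding a'_def using cd i by simp
  have idv: "cp G (Suc (Suc k)) (Suc i) v (dg G (Suc k) (Suc i) d) = v" using cells i cd fv by simp
  have Q2: "cp G (Suc (Suc (Suc k))) (Suc (Suc i)) (dg G (Suc (Suc k)) (Suc i) v) (cn G (Suc (Suc k)) (Suc i) Pos u3) \<in> cell G (Suc (Suc (Suc k)))" "cn G (Suc (Suc k)) i Pos v \<in> cell G (Suc (Suc (Suc k)))"
     "cp G (Suc (Suc (Suc k))) (Suc i) (cn G (Suc (Suc k)) (Suc i) Neg a') (dg G (Suc (Suc k)) (Suc (Suc i)) u3) \<in> cell G (Suc (Suc (Suc k)))" "cp G (Suc (Suc (Suc k))) (Suc i) (dg G (Suc (Suc k)) (Suc i) u3) (cn G (Suc (Suc k)) (Suc i) Neg u3) \<in> cell G (Suc (Suc (Suc k)))"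
    using cells w i cd fv fu3 fa' by simp_all
  have I7: "cp G (Suc (Suc (Suc k))) (Suc (Suc i)) (cp G (Suc (Suc (Suc k))) (Suc i) (cn G (Suc (Suc k)) i Pos v) (cp G (Suc (Suc (Suc k))) (Suc (Suc i)) (dg G (Suc (Suc k)) (Suc i) v) (cn G (Suc (Suc k)) (Suc i) Pos u3))) (cp G (Suc (Suc (Suc k))) (Suc i) (cn G (Suc (Suc k)) (Suc i) Neg a') (dg G (Suc (Suc k)) (Suc (Suc i)) u3)) = cp G (Suc (Suc (Suc k))) (Suc i) (cp G (Suc (Suc (Suc k))) (Suc (Suc i)) (cn G (Suc (Suc k)) i Pos v) (cn G (Suc (Suc k)) (Suc i) Neg a')) (cp G (Suc (Suc (Suc k))) (Suc (Suc i)) (cp G (Suc (Suc (Suc k))) (Suc (Suc i)) (dg G (Suc (Suc k)) (Suc i) v) (cn G (Suc (Suc k)) (Suc i) Pos u3)) (dg G (Suc (Suc k)) (Suc (Suc i)) u3))"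
    by (rule interchange) (use cells w i cd in \<open>simp_all del: cp_lid cp_rid add: fv fu3 fa' idv a'_def\<close>)
  have I7b: "cp G (Suc (Suc (Suc k))) (Suc (Suc i)) (cp G (Suc (Suc (Suc k))) (Suc (Suc i)) (dg G (Suc (Suc k)) (Suc i) v) (cn G (Suc (Suc k)) (Suc i) Pos u3)) (dg G (Suc (Suc k)) (Suc (Suc i)) u3) = cp G (Suc (Suc (Suc k))) (Suc (Suc i)) (dg G (Suc (Suc k)) (Suc i) v) (cn G (Suc (Suc k)) (Suc i) Pos u3)"
    using cells w i cd fv fu3 by simp
  have I8: "cp G (Suc (Suc (Suc k))) (Suc (Suc i)) (cp G (Suc (Suc (Suc k))) (Suc i) (cp G (Suc (Suc (Suc k))) (Suc (Suc i)) (cn G (Suc (Suc k)) i Pos v) (cn G (Suc (Suc k)) (Suc i) Neg a')) (cp G (Suc (Suc (Suc k))) (Suc (Suc i)) (dg G (Suc (Suc k)) (Suc i) v) (cn G (Suc (Suc k)) (Suc i) Pos u3))) (cp G (Suc (Suc (Suc k))) (Suc i) (dg G (Suc (Suc k)) (Suc i) u3) (cn G (Suc (Suc k)) (Suc i) Neg u3)) = cp G (Suc (Suc (Suc k))) (Suc i) (cp G (Suc (Suc (Suc k))) (Suc (Suc i)) (cp G (Suc (Suc (Suc k))) (Suc (Suc i)) (cn G (Suc (Suc k)) i Pos v) (cn G (Suc (Suc k)) (Suc i) Neg a')) (dg G (Suc (Suc k)) (Suc i) u3)) (cp G (Suc (Suc (Suc k))) (Suc (Suc i)) (cp G (Suc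 (Suc (Suc k))) (Suc (Suc i)) (dg G (Suc (Suc k)) (Suc i) v) (cn G (Suc (Suc k)) (Suc i) Pos u3)) (cn G (Suc (Suc k)) (Suc i) Neg u3))"
    by (rule interchange) (use cells w i cd in \<open>simp_all del: cp_lid cp_rid add: fv fu3 fa' idv a'_def\<close>)
  have G1: "cp G (Suc (Suc (Suc k))) (Suc (Suc i)) (cp G (Suc (Suc (Suc k))) (Suc (Suc i)) (cn G (Suc (Suc k)) i Pos v) (cn G (Suc (Suc k)) (Suc i) Neg a')) (dg G (Suc (Suc k)) (Suc i) u3) = cn G (Suc (Suc k)) i Pos u"
  proof -
    have "cp G (Suc (Suc (Suc k))) (Suc (Suc i)) (cp G (Suc (Suc (Suc k))) (Suc (Suc i)) (cn G (Suc (Suc k)) i Pos v) (cn G (Suc (Suc k)) (Suc i) Neg a')) (dg G (Suc (Suc k)) (Suc i) u3) = cp G (Suc (Suc (Suc k))) (Suc (Suc i)) (cn G (Suc (Suc k)) i Pos v) (cp G (Suc (Suc (Suc k))) (Suc (Suc i)) (cn G (Suc (Suc k)) (Suc i) Neg a') (dg G (Suc (Suc k)) (Suc i) u3))"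
      by (rule comp_assoc) (use cells w i cd in \<open>simp_all del: cp_lid cp_rid cp_assoc add: fv fu3 fa' idv a'_def\<close>)
    also have "... = cp G (Suc (Suc (Suc k))) (Suc (Suc i)) (cn G (Suc (Suc k)) i Pos v) (cn G (Suc (Suc k)) i Pos u3)"
      unfolding a'_def u3_def using Tlem'[OF cd(2) i] by simp
    also have "... = cn G (Suc (Suc k)) i Pos u" unfolding uvu
      by (rule conn_comp_lt[symmetric]) (use cells cd w i in \<open>simp_all del: cp_lid cp_rid add: idw a_def c_def v_def u3_def d_def\<close>)
    finally show ?thesis .
  qed
  have G2: "cp G (Suc (Suc (Suc k))) (Suc (Suc i)) (cp G (Suc (Suc (Suc k))) (Suc (Suc i)) (dg G (Suc (Suc k)) (Suc i) v) (cn G (Suc (Suc k)) (Suc i) Pos u3)) (cn G (Suc (Suc k)) (Suc i) Neg u3) = dg G (Suc (Suc k)) (Suc i) u"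
  proof -
    have "cp G (Suc (Suc (Suc k))) (Suc (Suc i)) (cp G (Suc (Suc (Suc k))) (Suc (Suc i)) (dg G (Suc (Suc k)) (Suc i) v) (cn G (Suc (Suc k)) (Suc i) Pos u3)) (cn G (Suc (Suc k)) (Suc i) Neg u3) = cp G (Suc (Suc (Suc k))) (Suc (Suc i)) (dg G (Suc (Suc k)) (Suc i) v) (cp G (Suc (Suc (Suc k))) (Suc (Suc i)) (cn G (Suc (Suc k)) (Suc i) Pos u3) (cn G (Suc (Suc k)) (Suc i) Neg u3))"
      by (rule comp_assoc) (use cells w i cd in \<open>simp_all del: cp_lid cp_rid cp_assoc add: fv fu3 fa' idv\<close>)
    also have "... = cp G (Suc (Suc (Suc k))) (Suc (Suc i)) (dg G (Suc (Suc k)) (Suc i) v) (dg G (Suc (Suc k)) (Suc i) u3)" using cells i by simp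
    also have "... = dg G (Suc (Suc k)) (Suc i) u" unfolding uvu
      by (rule deg_comp_le[symmetric]) (use cells cd w i in \<open>simp_all del: cp_lid cp_rid add: idw a_def c_def v_def u3_def d_def\<close>)
    finally show ?thesis .
  qed
  have G3: "cp G (Suc (Suc (Suc k))) (Suc i) (cn G (Suc (Suc k)) i Pos u) (dg G (Suc (Suc k)) (Suc i) u) = cn G (Suc (Suc k)) i Pos u" using cells i by simp
  have L0: "cp G (Suc (Suc (Suc k))) (Suc (Suc i)) (cn G (Suc (Suc k)) (Suc i) Pos u) (cp G (Suc (Suc (Suc k))) (Suc (Suc i)) (X) (dg G (Suc (Suc k)) i u3)) = cp G (Suc (Suc (Suc k))) (Suc (Suc i)) (cp G (Suc (Suc (Suc k))) (Suc (Suc i)) (cp G (Suc (Suc (Suc k))) (Suc i) (cn G (Suc (Suc k)) i Pos v) (cp G (Suc (Suc (Suc k))) (Suc (Suc i)) (dg G (Suc (Suc k)) (Suc i) v) (cn G (Suc (Suc k)) (Suc i) Pos u3))) (cp G (Suc (Suc (Suc k))) (Suc i) (cn G (Suc (Suc k)) (Suc i) Neg a') (dg G (Suc (Suc k)) (Suc (Suc i)) u3))) (cp G (Suc (Suc (Suc k))) (Suc i) (dg G (Suc (Suc k)) (Suc i) u3) (cn G (Suc (Suc k)) (Suc i) Neg u3))"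
  proof -
    have "cp G (Suc (Suc (Suc k))) (Suc (Suc i)) (cn G (Suc (Suc k)) (Suc i) Pos u) (cp G (Suc (Suc (Suc k))) (Suc (Suc i)) (X) (dg G (Suc (Suc k)) i u3)) = cp G (Suc (Suc (Suc k))) (Suc (Suc i)) (cp G (Suc (Suc (Suc k))) (Suc (Suc i)) (cn G (Suc (Suc k)) (Suc i) Pos u) (X)) (dg G (Suc (Suc k)) i u3)"
      by (rule comp_assoc[symmetric]) (use cells w i cd Xc f1 f2 in \<open>simp_all del: cp_lid cp_rid cp_assoc add: u3_def\<close>)
    also have "... = cp G (Suc (Suc (Suc k))) (Suc (Suc i)) (cp G (Suc (Suc (Suc k))) (Suc i) (cn G (Suc (Suc k)) i Pos v) (cp G (Suc (Suc (Suc k))) (Suc (Suc i)) (dg G (Suc (Suc k)) (Suc i) v) (cn G (Suc (Suc k)) (Suc i) Pos u3))) (cp G (Suc (Suc (Suc k))) (Suc (Suc i)) (cp G (Suc (Suc (Suc k))) (Suc i) (cn G (Suc (Suc k)) (Suc i) Neg a') (dg G (Suc (Suc k)) (Suc (Suc i)) u3)) (cp G (Suc (Suc (Suc k))) (Suc i) (dg G (Suc (Suc k)) (Suc i) u3) (cn G (Suc (Suc k)) (Suc i) Neg u3)))"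
      unfolding A R45 ..
    also have "... = cp G (Suc (Suc (Suc k))) (Suc (Suc i)) (cp G (Suc (Suc (Suc k))) (Suc (Suc i)) (cp G (Suc (Suc (Suc k))) (Suc i) (cn G (Suc (Suc k)) i Pos v) (cp G (Suc (Suc (Suc k))) (Suc (Suc i)) (dg G (Suc (Suc k)) (Suc i) v) (cn G (Suc (Suc k)) (Suc i) Pos u3))) (cp G (Suc (Suc (Suc k))) (Suc i) (cn G (Suc (Suc k)) (Suc i) Neg a') (dg G (Suc (Suc k)) (Suc (Suc i)) u3))) (cp G (Suc (Suc (Suc k))) (Suc i) (dg G (Suc (Suc k)) (Suc i) u3) (cn G (Suc (Suc k)) (Suc i) Neg u3))"
      by (rule comp_assoc[symmetric]) (use cells w i cd Q2 in \<open>simp_all del: cp_lid cp_rid cp_assoc add: fv fu3 fa' idv a'_def\<close>)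
    finally show ?thesis .
  qed
  have "psi G (Suc (Suc (Suc k))) (Suc i) X = cn G (Suc (Suc k)) i Pos u"
    unfolding S2 unfolding L0 unfolding I7 unfolding I7b unfolding I8 unfolding G1 G2 unfolding G3 ..
  then show ?thesis unfolding X_def u_def .
qed

end

fun pr :: "'a cubcat \<Rightarrow> nat \<Rightarrow> nat \<Rightarrow> nat \<Rightarrow> 'a \<Rightarrow> 'a" where
  "pr G n k 0 x = x"
| "pr G n k (Suc l) x = pr G n (Suc k) l (psi G n k x)"

definition FF :: "'a cubcat \<Rightarrow> nat \<Rightarrow> nat \<Rightarrow> nat \<Rightarrow> 'a \<Rightarrow> 'a" where
  "FF G n r k x = Phi_upto G n (r - 1) (pr G n k (r - k) x)"

lemma pr_snoc: "pr G n k (Suc l) x = psi G n (k + l) (pr G n k l x)"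
  by (induction l arbitrary: k x) auto

lemma psi_upto_pr: "psi_upto G n l x = pr G n 1 l x"
  by (induction l) (simp_all add: pr_snoc del: pr.simps(2))

lemma FF_step: "k < r \<Longrightarrow> FF G n r k x = FF G n r (Suc k) (psi G n k x)"
proof -
  assume "k < r"
  then have "r - k = Suc (r - Suc k)" by arith
  then show ?thesis unfolding FF_def by simp
qed

lemma FF_block: "2 \<le> r \<Longrightarrow> FF G n r r x = FF G n (r - 1) 1 x"
proof -
  assume r: "2 \<le> r"
  then obtain s where s: "r = Suc (Suc s)" by (cases r; cases "r - 1") auto
  show ?thesis unfolding FF_def s by (simp add: Psi_def psi_upto_pr)
qed

lemma FF_base: "FF G n (Suc 0) (Suc 0) x = x"
  unfolding FF_def by simp

lemma FF_Phi: "1 \<le> n \<Longrightarrow> FF G n n 1 x = Phi G n x"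
proof -
  assume "1 \<le> n"
  then obtain s where s: "n = Suc s" by (cases n) auto
  show ?thesis unfolding FF_def Phi_def s by (simp add: Psi_def psi_upto_pr)
qed

lemma rk_induct:
  fixes P :: "nat \<Rightarrow> nat \<Rightarrow> bool"
  assumes base: "P 1 1"
    and blk: "\<And>r. 2 \<le> r \<Longrightarrow> P (r - 1) 1 \<Longrightarrow> P r r"
    and stp: "\<And>r k. 1 \<le> k \<Longrightarrow> k < r \<Longrightarrow> P r (Suc k) \<Longrightarrow> P r k"
  shows "1 \<le> k \<Longrightarrow> k \<le> r \<Longrightarrow> P r k"
proof (induction r arbitrary: k)
  case 0 then show ?case by simp
next
  case (Suc r)
  show ?case
  proof (cases "r = 0")
    case True
    then have "k = 1" using Suc by simp
    then show ?thesis using True base by simp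
  next
    case False
    have top: "P (Suc r) (Suc r)" using blk[of "Suc r"] Suc.IH[of 1] False by simp
    have "\<forall>d. d \<le> r \<longrightarrow> P (Suc r) (Suc r - d)"
    proof
      fix d show "d \<le> r \<longrightarrow> P (Suc r) (Suc r - d)"
      proof (induction d)
        case 0 then show ?case using top by simp
      next
        case (Suc d)
        show ?case
        proof
          assume "Suc d \<le> r"
          then have "P (Suc r) (Suc r - d)" using Suc by simp
          moreover have "Suc (Suc r - Suc d) = Suc r - d" using \<open>Suc d \<le> r\<close> by simp
          ultimately show "P (Suc r) (Suc r - Suc d)" using stp[of "Suc r - Suc d" "Suc r"] \<open>Suc d \<le> r\<close> by simp
        qed
      qed
    qed
    moreover have "Suc r - k \<le> r" "Suc r - (Suc r - k) = k" using Suc.prems by auto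
    ultimately show ?thesis by metis
  qed
qed

context cubical_omega_cat_conn
begin

definition M2P :: "nat \<Rightarrow> nat \<Rightarrow> nat \<Rightarrow> bool" where
  "M2P m r k \<longleftrightarrow> (\<forall>j v. r \<le> Suc m \<longrightarrow> v \<in> cell G m \<longrightarrow> 1 \<le> j \<longrightarrow> j \<le> r \<longrightarrow> (j < r \<or> k < r \<or> j = 1) \<longrightarrow>
     (\<exists>y\<in>cell G m. FF G (Suc m) r k (dg G m j v) = dg G m 1 y))"

lemma M2_base: "M2P m 1 1"
  unfolding M2P_def
proof (intro allI impI)
  fix j v assume a: "1 \<le> Suc m" "v \<in> cell G m" "1 \<le> j" "j \<le> (1::nat)" "j < 1 \<or> (1::nat) < 1 \<or> j = 1"
  then have "j = 1" by simp
  then show "\<exists>y\<in>cell G m. FF G (Suc m) 1 1 (dg G m j v) = dg G m 1 y" using a(2) by (intro bexI[of _ v]) (simp_all add: FF_base)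
qed

lemma M2_blk: "2 \<le> r \<Longrightarrow> M2P m (r - 1) 1 \<Longrightarrow> M2P m r r"
  unfolding M2P_def
proof (intro allI impI)
  fix j v assume r: "2 \<le> r" and IH: "\<forall>j v. r - 1 \<le> Suc m \<longrightarrow> v \<in> cell G m \<longrightarrow> 1 \<le> j \<longrightarrow> j \<le> r - 1 \<longrightarrow> (j < r - 1 \<or> 1 < r - 1 \<or> j = 1) \<longrightarrow>
     (\<exists>y\<in>cell G m. FF G (Suc m) (r - 1) 1 (dg G m j v) = dg G m 1 y)"
    and a: "r \<le> Suc m" "v \<in> cell G m" "1 \<le> j" "j \<le> r" "j < r \<or> r < r \<or> j = 1"
  have h: "r - 1 \<le> Suc m" "j \<le> r - 1" "j < r - 1 \<or> 1 < r - 1 \<or> j = 1" using a r by auto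
  obtain y where "y \<in> cell G m" "FF G (Suc m) (r - 1) 1 (dg G m j v) = dg G m 1 y"
    using IH h a(2,3) by blast
  then show "\<exists>y\<in>cell G m. FF G (Suc m) r r (dg G m j v) = dg G m 1 y"
    using FF_block[of r G "Suc m" "dg G m j v"] r by auto
qed

lemma M2_stp: "1 \<le> k \<Longrightarrow> k < r \<Longrightarrow> M2P m r (Suc k) \<Longrightarrow> M2P m r k"
  unfolding M2P_def
proof (intro allI impI)
  fix j v assume k: "1 \<le> k" "k < r" and IH: "\<forall>j v. r \<le> Suc m \<longrightarrow> v \<in> cell G m \<longrightarrow> 1 \<le> j \<longrightarrow> j \<le> r \<longrightarrow> (j < r \<or> Suc k < r \<or> j = 1) \<longrightarrow>
     (\<exists>y\<in>cell G m. FF G (Suc m) r (Suc k) (dg G m j v) = dg G m 1 y)"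
    and a: "r \<le> Suc m" "v \<in> cell G m" "1 \<le> j" "j \<le> r" "j < r \<or> k < r \<or> j = 1"
  obtain m' where m: "m = Suc m'" using k a by (cases m) auto
  have km: "k \<le> Suc m'" using k a m by simp
  have "\<exists>j' v'. v' \<in> cell G m \<and> 1 \<le> j' \<and> j' \<le> r \<and> (j' < r \<or> Suc k < r \<or> j' = 1) \<and> psi G (Suc m) k (dg G m j v) = dg G m j' v'"
  proof (cases "j < k")
    case True
    then obtain i where i: "k = Suc i" "j \<le> i" by (cases k) auto
    have "psi G (Suc m) k (dg G m j v) = dg G m j (psi G m i v)"
      using psi_dg_lt[of v m' j i] a i km m by simp
    moreover have "psi G m i v \<in> cell G m" using psi_cl[of v m' i] a i km m by simp
    moreover have "j < r" using True k by simp
    ultimately show ?thesis using a by (intro exI[of _ j] exI[of _ "psi G m i v"]) simp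
  next
    case False
    show ?thesis
    proof (cases "j = k")
      case True
      have "psi G (Suc m) k (dg G m j v) = dg G m j v" using psi_dg_eq[of v m' k] a km m k True by simp
      then show ?thesis using a k True by (intro exI[of _ j] exI[of _ v]) simp
    next
      case False
      show ?thesis
      proof (cases "j = Suc k")
        case True
        have "psi G (Suc m) k (dg G m j v) = dg G m k v" using psi_dg_suc[of v m' k] a km m k True by simp
        then show ?thesis using a k True by (intro exI[of _ k] exI[of _ v]) simp
      next
        case False
        then have jk: "Suc k < j" using \<open>\<not> j < k\<close> \<open>j \<noteq> k\<close> by simp
        have "psi G (Suc m) k (dg G m j v) = dg G m j (psi G m k v)"
          using psi_dg_gt[of v m' k j] a jk km m k by simp
        moreover have "psi G m k v \<in> cell G m" using psi_cl[of v m' k] a jk km m k by simp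
        moreover have "j < r \<or> Suc k < r" using a jk by auto
        ultimately show ?thesis using a by (intro exI[of _ j] exI[of _ "psi G m k v"]) auto
      qed
    qed
  qed
  then obtain j' v' where jv: "v' \<in> cell G m" "1 \<le> j'" "j' \<le> r" "j' < r \<or> Suc k < r \<or> j' = 1"
     "psi G (Suc m) k (dg G m j v) = dg G m j' v'" by blast
  obtain y where "y \<in> cell G m" "FF G (Suc m) r (Suc k) (dg G m j' v') = dg G m 1 y"
    using IH jv(1-4) a(1) by blast
  then show "\<exists>y\<in>cell G m. FF G (Suc m) r k (dg G m j v) = dg G m 1 y"
    using FF_step[of k r G "Suc m" "dg G m j v"] k jv(5) by auto
qed

lemma M2: "1 \<le> k \<Longrightarrow> k \<le> r \<Longrightarrow> M2P m r k"
  by (rule rk_induct[of "M2P m", OF M2_base M2_blk M2_stp])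

definition good :: "nat \<Rightarrow> nat \<Rightarrow> nat \<Rightarrow> 'a \<Rightarrow> bool" where
  "good m r k x \<longleftrightarrow> (\<exists>z\<in>cell G m. FF G (Suc m) r k x = dg G m 1 z)"

lemma good_step: "k < r \<Longrightarrow> good m r k x = good m r (Suc k) (psi G (Suc m) k x)"
  unfolding good_def using FF_step[of k r G "Suc m" x] by simp

lemma M2good: "1 \<le> k \<Longrightarrow> k \<le> r \<Longrightarrow> r \<le> Suc m \<Longrightarrow> v \<in> cell G m \<Longrightarrow> 1 \<le> j \<Longrightarrow> j \<le> r \<Longrightarrow> (j < r \<or> k < r \<or> j = 1) \<Longrightarrow>
   good m r k (dg G m j v)"
  using M2[of k r m] unfolding M2P_def good_def by blast

lemma eps1_cp:
  assumes y: "y1 \<in> cell G m" "y2 \<in> cell G m" and c: "composable G (Suc m) j (dg G m 1 y1) (dg G m 1 y2)"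
  shows "\<exists>z\<in>cell G m. cp G (Suc m) j (dg G m 1 y1) (dg G m 1 y2) = dg G m 1 z"
proof (cases "j = 1")
  case True
  then have "y1 = y2" using c y by simp
  then show ?thesis using True y by (intro bexI[of _ y1]) simp_all
next
  case False
  then obtain j' where j: "j = Suc j'" "1 \<le> j'" using c by (cases j) auto
  obtain m'' where m: "m = Suc m''" using c j y by (cases m) auto
  have jle: "j' \<le> m" and ceq: "fc G (Suc m) j Pos (dg G m 1 y1) = fc G (Suc m) j Neg (dg G m 1 y2)"
    using c j by auto
  have "dg G m'' 1 (fc G m j' Pos y1) = dg G m'' 1 (fc G m j' Neg y2)"
    using y j m jle ceq by simp
  then have h: "fc G (Suc m'') 1 Neg (dg G m'' 1 (fc G m j' Pos y1)) = fc G (Suc m'') 1 Neg (dg G m'' 1 (fc G m j' Neg y2))" by simp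
  have "fc G m j' Pos y1 \<in> cell G m''" "fc G m j' Neg y2 \<in> cell G m''" using y m j jle by auto
  then have e: "fc G m j' Pos y1 = fc G m j' Neg y2" using h by simp
  have cc: "composable G m j' y1 y2" using e y j m c by simp
  have "dg G m 1 (cp G m j' y1 y2) = cp G (Suc m) (Suc j') (dg G m 1 y1) (dg G m 1 y2)"
    by (rule deg_comp_le[OF cc]) (use j in simp_all)
  then show ?thesis using cc j by (intro bexI[of _ "cp G m j' y1 y2"]) simp_all
qed

definition M1P :: "nat \<Rightarrow> nat \<Rightarrow> nat \<Rightarrow> bool" where
  "M1P m r k \<longleftrightarrow> (\<forall>j x y. r \<le> Suc m \<longrightarrow> composable G (Suc m) j x y \<longrightarrow> good m r k x \<longrightarrow> good m r k y \<longrightarrow>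
     good m r k (cp G (Suc m) j x y))"

lemma M1_base: "M1P m 1 1"
  unfolding M1P_def
proof (intro allI impI)
  fix j x y assume a: "1 \<le> Suc m" "composable G (Suc m) j x y" "good m 1 1 x" "good m 1 1 y"
  obtain z1 where z1: "z1 \<in> cell G m" "x = dg G m 1 z1" using a(3) unfolding good_def by (auto simp: FF_base)
  obtain z2 where z2: "z2 \<in> cell G m" "y = dg G m 1 z2" using a(4) unfolding good_def by (auto simp: FF_base)
  show "good m 1 1 (cp G (Suc m) j x y)"
    using eps1_cp[of z1 m z2 j] z1 z2 a(2) unfolding good_def by (simp add: FF_base)
qed

lemma M1_blk: "2 \<le> r \<Longrightarrow> M1P m (r - 1) 1 \<Longrightarrow> M1P m r r"
  unfolding M1P_def good_def using FF_block[of r G "Suc m"] by simp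

lemma M1_stp: "1 \<le> k \<Longrightarrow> k < r \<Longrightarrow> M1P m r (Suc k) \<Longrightarrow> M1P m r k"
  unfolding M1P_def
proof (intro allI impI)
  fix j x y
  assume k: "1 \<le> k" "k < r" and IH: "\<forall>j x y. r \<le> Suc m \<longrightarrow> composable G (Suc m) j x y \<longrightarrow> good m r (Suc k) x \<longrightarrow> good m r (Suc k) y \<longrightarrow> good m r (Suc k) (cp G (Suc m) j x y)"
    and a: "r \<le> Suc m" "composable G (Suc m) j x y" "good m r k x" "good m r k y"
  obtain m' where m: "m = Suc m'" using k a by (cases m) auto
  have IH': "\<And>j x y. composable G (Suc m) j x y \<Longrightarrow> good m r (Suc k) x \<Longrightarrow> good m r (Suc k) y \<Longrightarrow> good m r (Suc k) (cp G (Suc m) j x y)"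
    using IH a(1) by blast
  have km: "k \<le> Suc m'" using k a m by simp
  have x: "x \<in> cell G (Suc (Suc m'))" "y \<in> cell G (Suc (Suc m'))" "1 \<le> j" "j \<le> Suc (Suc m')" using a(2) m by auto
  have c: "composable G (Suc (Suc m')) j x y" using a(2) m by simp
  have ceq: "fc G (Suc (Suc m')) j Pos x = fc G (Suc (Suc m')) j Neg y" using c by simp
  have gx: "good m r (Suc k) (psi G (Suc m) k x)" using a(3) good_step[of k r m x] k by simp
  have gy: "good m r (Suc k) (psi G (Suc m) k y)" using a(4) good_step[of k r m y] k by simp
  have gw: "\<And>w. w \<in> cell G m \<Longrightarrow> good m r (Suc k) (dg G m k w)"
    using M2good[of "Suc k" r m _ k] k a(1) by simp
  have "good m r (Suc k) (psi G (Suc m) k (cp G (Suc m) j x y))"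
  proof (cases "j < k")
    case True
    have e: "psi G (Suc m) k (cp G (Suc m) j x y) = cp G (Suc m) j (psi G (Suc m) k x) (psi G (Suc m) k y)"
      using L1a[OF c True km] m by simp
    have cc: "composable G (Suc m) j (psi G (Suc m) k x) (psi G (Suc m) k y)"
      using x km k True m ceq by simp
    show ?thesis unfolding e by (rule IH'[OF cc gx gy])
  next
    case False
    show ?thesis
    proof (cases "j = k")
      case True
      have ck: "composable G (Suc (Suc m')) k x y" using c True by simp
      have ceqk: "fc G (Suc (Suc m')) k Pos x = fc G (Suc (Suc m')) k Neg y" using ceq True by simp
      have e: "psi G (Suc m) k (cp G (Suc m) j x y) =
        cp G (Suc m) k (cp G (Suc m) (Suc k) (psi G (Suc m) k x) (dg G m k (fc G (Suc m) (Suc k) Pos y)))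
         (cp G (Suc m) (Suc k) (dg G m k (fc G (Suc m) (Suc k) Neg x)) (psi G (Suc m) k y))"
        using L3[OF ck km] m True by simp
      have w1: "fc G (Suc m) (Suc k) Pos y \<in> cell G m" "fc G (Suc m) (Suc k) Neg x \<in> cell G m" using x km m by auto
      have c1: "composable G (Suc m) (Suc k) (psi G (Suc m) k x) (dg G m k (fc G (Suc m) (Suc k) Pos y))"
        using x km k m ceqk by simp
      have c2: "composable G (Suc m) (Suc k) (dg G m k (fc G (Suc m) (Suc k) Neg x)) (psi G (Suc m) k y)"
        using x km k m ceqk by simp
      have c3: "composable G (Suc m) k (cp G (Suc m) (Suc k) (psi G (Suc m) k x) (dg G m k (fc G (Suc m) (Suc k) Pos y)))
         (cp G (Suc m) (Suc k) (dg G m k (fc G (Suc m) (Suc k) Neg x)) (psi G (Suc m) k y))"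
        using x km k m ceqk by simp
      show ?thesis unfolding e
        by (rule IH'[OF c3 IH'[OF c1 gx gw[OF w1(1)]] IH'[OF c2 gw[OF w1(2)] gy]])
    next
      case False
      show ?thesis
      proof (cases "j = Suc k")
        case True
        have ck: "composable G (Suc (Suc m')) (Suc k) x y" using c True by simp
        note fc1 = fcomp[OF ck]
        have ceqk: "fc G (Suc (Suc m')) (Suc k) Pos x = fc G (Suc (Suc m')) (Suc k) Neg y" using ceq True by simp
        have e: "psi G (Suc m) k (cp G (Suc m) j x y) =
          cp G (Suc m) k (cp G (Suc m) (Suc k) (dg G m k (fc G (Suc m) k Neg x)) (psi G (Suc m) k y))
           (cp G (Suc m) (Suc k) (psi G (Suc m) k x) (dg G m k (fc G (Suc m) k Pos y)))"
          using L2[OF ck k(1) km] m True by simp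
        have w1: "fc G (Suc m) k Neg x \<in> cell G m" "fc G (Suc m) k Pos y \<in> cell G m" using x km m k by auto
        have c1: "composable G (Suc m) (Suc k) (dg G m k (fc G (Suc m) k Neg x)) (psi G (Suc m) k y)"
          using x km k m fc1 ceqk by simp
        have c2: "composable G (Suc m) (Suc k) (psi G (Suc m) k x) (dg G m k (fc G (Suc m) k Pos y))"
          using x km k m fc1 ceqk by simp
        have c3: "composable G (Suc m) k (cp G (Suc m) (Suc k) (dg G m k (fc G (Suc m) k Neg x)) (psi G (Suc m) k y))
           (cp G (Suc m) (Suc k) (psi G (Suc m) k x) (dg G m k (fc G (Suc m) k Pos y)))"
          using x km k m fc1 ceqk by simp
        show ?thesis unfolding e
          by (rule IH'[OF c3 IH'[OF c1 gw[OF w1(1)] gy] IH'[OF c2 gx gw[OF w1(2)]]])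
      next
        case False
        then obtain j' where j: "j = Suc j'" "k < j'" using \<open>\<not> j < k\<close> \<open>j \<noteq> k\<close> by (cases j) auto
        have cj: "composable G (Suc (Suc m')) (Suc j') x y" using c j by simp
        have e: "psi G (Suc m) k (cp G (Suc m) j x y) = cp G (Suc m) j (psi G (Suc m) k x) (psi G (Suc m) k y)"
          using L1b[OF cj k(1) j(2)] m j by simp
        have cc: "composable G (Suc m) j (psi G (Suc m) k x) (psi G (Suc m) k y)"
          using x km k j m ceq by simp
        show ?thesis unfolding e by (rule IH'[OF cc gx gy])
      qed
    qed
  qed
  then show "good m r k (cp G (Suc m) j x y)" using good_step[of k r m] k by simp
qed

lemma M1: "1 \<le> k \<Longrightarrow> k \<le> r \<Longrightarrow> M1P m r k"
  by (rule rk_induct[of "M1P m", OF M1_base M1_blk M1_stp])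

end

context cubical_omega_cat_conn
begin

lemma Kgen: "w \<in> cell G (Suc (Suc k)) \<Longrightarrow> 1 \<le> i \<Longrightarrow> i \<le> Suc k \<Longrightarrow>
  psi G (Suc (Suc (Suc k))) (Suc i) (psi G (Suc (Suc (Suc k))) i (cn G (Suc (Suc k)) (Suc i) \<alpha> w))
       = cn G (Suc (Suc k)) i (opp \<alpha>) (psi G (Suc (Suc k)) i w)"
  by (cases \<alpha>) (simp_all add: Kpos Kneg)

lemma psi_upto_cn_low: "u \<in> cell G (Suc m) \<Longrightarrow> 1 \<le> j \<Longrightarrow> j \<le> Suc m \<Longrightarrow> Suc l < j \<Longrightarrow>
  psi_upto G (Suc (Suc m)) l (cn G (Suc m) j \<alpha> u) = cn G (Suc m) j \<alpha> (psi_upto G (Suc m) l u)"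
proof (induction l)
  case (Suc l)
  have c: "psi_upto G (Suc m) l u \<in> cell G (Suc m)" using psi_upto_cl[of u "Suc m" l] Suc by simp
  show ?case using Suc psi_cn_lt[OF c, of "Suc l" j \<alpha>] by simp
qed simp

lemma psi_upto_cn_hi:
  assumes u: "u \<in> cell G (Suc (Suc k))" and j: "2 \<le> j" and jl: "j \<le> l" and l: "l \<le> Suc (Suc k)"
  shows "psi_upto G (Suc (Suc (Suc k))) l (cn G (Suc (Suc k)) j \<alpha> u) = cn G (Suc (Suc k)) (j - 1) (opp \<alpha>) (psi_upto G (Suc (Suc k)) (l - 1) u)"
proof -
  have "l \<le> Suc (Suc k) \<longrightarrow> psi_upto G (Suc (Suc (Suc k))) l (cn G (Suc (Suc k)) j \<alpha> u) = cn G (Suc (Suc k)) (j - 1) (opp \<alpha>) (psi_upto G (Suc (Suc k)) (l - 1) u)"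
    using jl
  proof (induction l rule: dec_induct)
    case base
    show ?case
    proof
      assume jk: "j \<le> Suc (Suc k)"
      obtain i where i: "j = Suc (Suc i)" using j by (cases j; cases "j - 1") auto
      have w: "psi_upto G (Suc (Suc k)) i u \<in> cell G (Suc (Suc k))" using psi_upto_cl[of u "Suc (Suc k)" i] u jk i by simp
      have low: "psi_upto G (Suc (Suc (Suc k))) i (cn G (Suc (Suc k)) (Suc (Suc i)) \<alpha> u) = cn G (Suc (Suc k)) (Suc (Suc i)) \<alpha> (psi_upto G (Suc (Suc k)) i u)"
        using psi_upto_cn_low[of u "Suc k" "Suc (Suc i)" i \<alpha>] u jk i by simp
      show "psi_upto G (Suc (Suc (Suc k))) j (cn G (Suc (Suc k)) j \<alpha> u) = cn G (Suc (Suc k)) (j - 1) (opp \<alpha>) (psi_upto G (Suc (Suc k)) (j - 1) u)"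
        using Kgen[OF w, of "Suc i" \<alpha>] low jk i by simp
    qed
  next
    case (step l)
    show ?case
    proof
      assume lk: "Suc l \<le> Suc (Suc k)"
      have IH: "psi_upto G (Suc (Suc (Suc k))) l (cn G (Suc (Suc k)) j \<alpha> u) = cn G (Suc (Suc k)) (j - 1) (opp \<alpha>) (psi_upto G (Suc (Suc k)) (l - 1) u)"
        using step lk by simp
      have c: "psi_upto G (Suc (Suc k)) (l - 1) u \<in> cell G (Suc (Suc k))" using psi_upto_cl[of u "Suc (Suc k)" "l - 1"] u lk by simp
      have e: "psi_upto G (Suc (Suc k)) l u = psi G (Suc (Suc k)) l (psi_upto G (Suc (Suc k)) (l - 1) u)"
        using step j by (cases l) auto
      show "psi_upto G (Suc (Suc (Suc k))) (Suc l) (cn G (Suc (Suc k)) j \<alpha> u) = cn G (Suc (Suc k)) (j - 1) (opp \<alpha>) (psi_upto G (Suc (Suc k)) (Suc l - 1) u)"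
        using IH e psi_cn_gt[OF c, of "j - 1" l "opp \<alpha>"] step j lk by simp
    qed
  qed
  then show ?thesis using l by simp
qed

lemma psi_upto_dg1: "v \<in> cell G (Suc m) \<Longrightarrow> l \<le> Suc m \<Longrightarrow>
  psi_upto G (Suc (Suc m)) l (dg G (Suc m) 1 v) = dg G (Suc m) 1 (psi_upto G (Suc m) (l - 1) v)"
proof (induction l)
  case 0 then show ?case by simp
next
  case (Suc l)
  show ?case
  proof (cases l)
    case 0 then show ?thesis using Suc psi_dg_eq[of v m 1] by simp
  next
    case (Suc l')
    have c: "psi_upto G (Suc m) l' v \<in> cell G (Suc m)" using psi_upto_cl[of v "Suc m" l'] Suc.prems Suc by simp
    show ?thesis using Suc.IH Suc.prems Suc psi_dg_lt[OF c, of 1 l] by simp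
  qed
qed

lemma psi_upto_cn1:
  assumes u: "u \<in> cell G (Suc m)" and l1: "1 \<le> l" and l: "l \<le> Suc m"
  shows "psi_upto G (Suc (Suc m)) l (cn G (Suc m) 1 \<alpha> u) = dg G (Suc m) 1 (psi_upto G (Suc m) (l - 1) u)"
proof -
  have "l \<le> Suc m \<longrightarrow> psi_upto G (Suc (Suc m)) l (cn G (Suc m) 1 \<alpha> u) = dg G (Suc m) 1 (psi_upto G (Suc m) (l - 1) u)"
    using l1
  proof (induction l rule: dec_induct)
    case base then show ?case using psi_cn_eq[of u m 1 \<alpha>] u by simp
  next
    case (step l)
    show ?case
    proof
      assume lm: "Suc l \<le> Suc m"
      have c: "psi_upto G (Suc m) (l - 1) u \<in> cell G (Suc m)" using psi_upto_cl[of u "Suc m" "l - 1"] u lm by simp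
      have e: "psi_upto G (Suc m) l u = psi G (Suc m) l (psi_upto G (Suc m) (l - 1) u)"
        using step by (cases l) auto
      show "psi_upto G (Suc (Suc m)) (Suc l) (cn G (Suc m) 1 \<alpha> u) = dg G (Suc m) 1 (psi_upto G (Suc m) (Suc l - 1) u)"
        using step lm e psi_dg_lt[OF c, of 1 l] by simp
    qed
  qed
  then show ?thesis using l by simp
qed

lemma Phi_upto_dg1: "v \<in> cell G (Suc m) \<Longrightarrow> r \<le> Suc (Suc m) \<Longrightarrow>
  Phi_upto G (Suc (Suc m)) r (dg G (Suc m) 1 v) = dg G (Suc m) 1 (Phi_upto G (Suc m) (r - 1) v)"
proof (induction r arbitrary: v)
  case 0 then show ?case by simp
next
  case (Suc r)
  have c: "psi_upto G (Suc m) (r - 1) v \<in> cell G (Suc m)" using psi_upto_cl[of v "Suc m" "r - 1"] Suc by simp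
  have e1: "Phi_upto G (Suc (Suc m)) (Suc r) (dg G (Suc m) 1 v) = Phi_upto G (Suc (Suc m)) r (dg G (Suc m) 1 (psi_upto G (Suc m) (r - 1) v))"
    using psi_upto_dg1[of v m r] Suc by (simp add: Psi_def)
  have e2: "Phi_upto G (Suc m) r v = Phi_upto G (Suc m) (r - 1) (psi_upto G (Suc m) (r - 1) v)" if "1 \<le> r"
    using that by (cases r) (auto simp: Psi_def)
  show ?case
  proof (cases r)
    case 0 then show ?thesis using Suc by (simp add: Psi_def)
  next
    case (Suc r') then show ?thesis using e1 e2 Suc.IH[OF c] \<open>Suc r \<le> Suc (Suc m)\<close> by simp
  qed
qed

lemma Phi_upto_cn: "u \<in> cell G (Suc m) \<Longrightarrow> 1 \<le> j \<Longrightarrow> j < r \<Longrightarrow> r \<le> Suc (Suc m) \<Longrightarrow>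
  Phi_upto G (Suc (Suc m)) r (cn G (Suc m) j \<alpha> u) = dg G (Suc m) 1 (Phi_upto G (Suc m) (r - 1) u)"
proof (induction r arbitrary: u j \<alpha>)
  case 0 then show ?case by simp
next
  case (Suc r)
  have c: "psi_upto G (Suc m) (r - 1) u \<in> cell G (Suc m)" using psi_upto_cl[of u "Suc m" "r - 1"] Suc by simp
  have e2: "Phi_upto G (Suc m) r u = Phi_upto G (Suc m) (r - 1) (psi_upto G (Suc m) (r - 1) u)"
    using Suc by (cases r) (auto simp: Psi_def)
  show ?case
  proof (cases "j = 1")
    case True
    have "Phi_upto G (Suc (Suc m)) (Suc r) (cn G (Suc m) j \<alpha> u) = Phi_upto G (Suc (Suc m)) r (dg G (Suc m) 1 (psi_upto G (Suc m) (r - 1) u))"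
      using psi_upto_cn1[of u m r \<alpha>] Suc True by (simp add: Psi_def)
    then show ?thesis using Phi_upto_dg1[OF c, of r] e2 Suc by simp
  next
    case False
    obtain k where k: "m = Suc k" using Suc False by (cases m) auto
    have "Phi_upto G (Suc (Suc m)) (Suc r) (cn G (Suc m) j \<alpha> u) = Phi_upto G (Suc (Suc m)) r (cn G (Suc m) (j - 1) (opp \<alpha>) (psi_upto G (Suc m) (r - 1) u))"
      using psi_upto_cn_hi[of u k j r \<alpha>] Suc False k by (simp add: Psi_def)
    also have "... = dg G (Suc m) 1 (Phi_upto G (Suc m) (r - 1) (psi_upto G (Suc m) (r - 1) u))"
      using Suc.IH[of "psi_upto G (Suc m) (r - 1) u" "j - 1" "opp \<alpha>"] c Suc False by simp
    finally show ?thesis using e2 by simp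
  qed
qed

lemma DC_good: "x \<in> DC n \<Longrightarrow> \<exists>m. n = Suc m \<and> good m n 1 x"
proof (induction rule: deg_conn_composites.induct)
  case (deg y i)
  obtain m where m: "n = Suc m" using deg by (cases n) auto
  have cnd: "i < n \<or> 1 < n \<or> i = 1" using deg m by (cases m) auto
  have "good m n 1 (dg G m i y)"
    using M2good[of 1 n m y i] deg m cnd by simp
  then show ?case using m by simp
next
  case (conn z j \<alpha>)
  obtain m where m: "n = Suc m" using conn by (cases n) auto
  obtain k where k: "m = Suc k" using conn m by (cases m) auto
  have z: "z \<in> cell G (Suc k)" using conn m k by simp
  have "FF G (Suc m) n 1 (cn G m j \<alpha> z) = dg G m 1 (Phi_upto G m (n - 1) z)"
    using FF_Phi[of "Suc m" G] Phi_upto_cn[OF z, of j n \<alpha>] conn m k unfolding Phi_def by simp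
  moreover have "Phi_upto G m (n - 1) z \<in> cell G m" using Phi_upto_cl[of z m "n - 1"] z k m by simp
  ultimately have "good m n 1 (cn G m j \<alpha> z)" unfolding good_def by blast
  then show ?case using m by simp
next
  case (comp a b k)
  obtain m where m: "n = Suc m" "good m n 1 a" using comp by blast
  have gb: "good m n 1 b" using comp m by auto
  have "good m n 1 (cp G n k a b)"
    using M1[of 1 n m] comp m gb unfolding M1P_def by auto
  then show ?case using m by simp
qed

lemma main: "x \<in> cell G n \<Longrightarrow> thin G n x \<longleftrightarrow> x \<in> DC n"
proof
  assume "x \<in> cell G n" "thin G n x" then show "x \<in> DC n" by (rule thin_DC)
next
  assume x: "x \<in> cell G n" and d: "x \<in> DC n"
  obtain m where m: "n = Suc m" "good m n 1 x" using DC_good[OF d] by blast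
  obtain z where "z \<in> cell G m" "FF G (Suc m) n 1 x = dg G m 1 z" using m unfolding good_def by blast
  then show "thin G n x" using thin_iff[OF x] FF_Phi[of n G x] m by auto
qed

end

theorem theorem9p3:
  fixes G :: "'a cubcat" and n :: nat and x :: 'a
  assumes "cubical_omega_cat_conn G"
    and "x \<in> cell G n"
  shows "thin G n x \<longleftrightarrow> x \<in> deg_conn_composites G n"
  using cubical_omega_cat_conn.main[OF assms(1) assms(2)] .

end
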